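(* Let $n\ge1$, $\alpha\in\mathbb{C}$ with $|\alpha|<1$, and $\phi_\alpha(z)=\left(\dfrac{z-\alpha}{1-\overline{\alpha}z}\right)^n$. Then: (1) the matrix of $S^*(\phi_\alpha)$ with respect to the orthonormal basis $e_k(z)=\dfrac{(1-|\alpha|^2)^{1/2}}{1-\overline\alpha z}\left(\dfrac{z-\alpha}{1-\overline\alpha z}\right)^{k-1}$, $k=1,\dots,n$, of $H(\phi_\alpha)$ equals $(S_n^*+\overline\alpha I_n)(I_n+\alpha S_n^* )^{-1}$; (2) $W(S^*(\phi_\alpha))=e^{-i\arg(\alpha)}W(S^*(\phi_{|\alpha|}))$; (3) the numerical radius of $S^*(\phi_\alpha)$ is independent of the argument of $\alpha$, and for $0\le\alpha<1$ the numerical range of $S^*(\phi_\alpha)$ is symmetric with respect to the real axis.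
   Context: $\mathbb{H}^2$ is the Hardy space of the unit disc, $S$ the unilateral shift $Sf=zf$. For an inner function $\phi$, $H(\phi)=\mathbb{H}^2\ominus\phi\mathbb{H}^2$, $S(\phi)f=P(zf)$ with $P$ the orthogonal projection onto $H(\phi)$, and $S^*(\phi)=S(\phi)^*=S^*|_{H(\phi)}$. $S_n$ is the $n\times n$ matrix with ones on the subdiagonal and zeros elsewhere, $S_n^*$ its transpose. $W(\cdot)$ denotes the numerical range. *)

theory Defs
  imports "HOL-Analysis.Analysis" "Jordan_Normal_Form.Gauss_Jordan_Elimination"
begin

text \<open>Functions on the unit disc are represented as functions complex to complex;
  only their values on the open unit disc matter.\<close>

definition taylor_coeff :: "(complex \<Rightarrow> complex) \<Rightarrow> nat \<Rightarrow> complex" where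
  "taylor_coeff f k = (deriv ^^ k) f 0 / of_nat (fact k)"

definition hardy2 :: "(complex \<Rightarrow> complex) set" where
  "hardy2 = {f. f holomorphic_on ball 0 1 \<and> summable (\<lambda>k. (cmod (taylor_coeff f k))\<^sup>2)}"

definition h2_inner :: "(complex \<Rightarrow> complex) \<Rightarrow> (complex \<Rightarrow> complex) \<Rightarrow> complex" where
  "h2_inner f g = (\<Sum>k. taylor_coeff f k * cnj (taylor_coeff g k))"

definition h2_norm :: "(complex \<Rightarrow> complex) \<Rightarrow> real" where
  "h2_norm f = sqrt (\<Sum>k. (cmod (taylor_coeff f k))\<^sup>2)"

definition model_space :: "(complex \<Rightarrow> complex) \<Rightarrow> (complex \<Rightarrow> complex) set" where
  "model_space \<phi> = {f \<in> hardy2. \<forall>g\<in>hardy2. h2_inner f (\<lambda>z. \<phi> z * g z) = 0}"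

definition bshift :: "(complex \<Rightarrow> complex) \<Rightarrow> (complex \<Rightarrow> complex)" where
  "bshift f z = (if z = 0 then deriv f 0 else (f z - f 0) / z)"

definition num_range_Sstar :: "(complex \<Rightarrow> complex) \<Rightarrow> complex set" where
  "num_range_Sstar \<phi> = {h2_inner (bshift f) f | f. f \<in> model_space \<phi> \<and> h2_norm f = 1}"

definition num_radius_Sstar :: "(complex \<Rightarrow> complex) \<Rightarrow> real" where
  "num_radius_Sstar \<phi> = Sup (cmod ` num_range_Sstar \<phi>)"

definition blaschke_pow :: "complex \<Rightarrow> nat \<Rightarrow> complex \<Rightarrow> complex" where
  "blaschke_pow \<alpha> n z = ((z - \<alpha>) / (1 - cnj \<alpha> * z)) ^ n"

definition ebasis :: "complex \<Rightarrow> nat \<Rightarrow> complex \<Rightarrow> complex" where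
  "ebasis \<alpha> k z = of_real (sqrt (1 - (cmod \<alpha>)\<^sup>2)) / (1 - cnj \<alpha> * z)
                   * ((z - \<alpha>) / (1 - cnj \<alpha> * z)) ^ (k - 1)"

definition shift_mat :: "nat \<Rightarrow> complex mat" where
  "shift_mat n = mat n n (\<lambda>(i, j). if i = j + 1 then 1 else 0)"

end

theory Submission
  imports Defs "HOL-Complex_Analysis.Complex_Analysis"
begin


definition l2 :: "(nat \<Rightarrow> complex) \<Rightarrow> bool" where
  "l2 a \<longleftrightarrow> summable (\<lambda>k. (cmod (a k))^2)"
definition sh :: "(nat \<Rightarrow> complex) \<Rightarrow> nat \<Rightarrow> complex" where
  "sh a n = (if n = 0 then 0 else a (n - 1))"

abbreviation tc where "tc \<equiv> taylor_coeff"

lemma tc_fps: "f has_fps_expansion F \<Longrightarrow> taylor_coeff f k = fps_nth F k"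
  by (simp add: taylor_coeff_def fps_nth_fps_expansion)

lemma ps_holo:
  assumes "\<And>z. z \<in> ball 0 1 \<Longrightarrow> (\<lambda>n. a n * z ^ n) sums g z"
  shows "g holomorphic_on ball 0 1"
  using power_series_holomorphic[of 0 1 a g] assms by simp

lemma ps_tc:
  assumes "\<And>z. z \<in> ball 0 1 \<Longrightarrow> (\<lambda>n. a n * z ^ n) sums g z"
  shows "taylor_coeff g k = a k"
proof -
  have "eventually (\<lambda>z. z \<in> ball 0 1) (nhds (0::complex))"
    by (intro eventually_nhds_in_open) auto
  hence "eventually (\<lambda>u. (\<lambda>n. fps_nth (Abs_fps a) n * u ^ n) sums g u) (nhds 0)"
    by eventually_elim (use assms in auto)
  hence "g has_fps_expansion Abs_fps a" by (rule has_fps_expansionI)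
  thus "taylor_coeff g k = a k" by (simp add: tc_fps)
qed

lemma holo_ps:
  assumes "f holomorphic_on ball 0 1" "z \<in> ball 0 1"
  shows "(\<lambda>n. tc f n * z ^ n) sums f z"
  using holomorphic_power_series[OF assms] by (simp add: taylor_coeff_def)

lemma tc_cong:
  assumes "\<And>z. z \<in> ball 0 1 \<Longrightarrow> f z = g z"
  shows "tc f = tc g"
proof
  fix k
  have "eventually (\<lambda>z. z \<in> ball 0 1) (nhds (0::complex))"
    by (intro eventually_nhds_in_open) auto
  hence "eventually (\<lambda>z. f z = g z) (nhds 0)"
    by eventually_elim (use assms in auto)
  thus "tc f k = tc g k" unfolding taylor_coeff_def
    using higher_deriv_cong_ev by metis
qed


lemma hardy2_iff: "f \<in> hardy2 \<longleftrightarrow> f holomorphic_on ball 0 1 \<and> l2 (tc f)"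
  by (simp add: hardy2_def l2_def)

lemma l2_add: "l2 a \<Longrightarrow> l2 b \<Longrightarrow> l2 (\<lambda>n. a n + b n)"
  unfolding l2_def
proof -
  assume A: "summable (\<lambda>k. (cmod (a k))\<^sup>2)" and B: "summable (\<lambda>k. (cmod (b k))\<^sup>2)"
  have "summable (\<lambda>k. 2 * (cmod (a k))\<^sup>2 + 2 * (cmod (b k))\<^sup>2)"
    using A B by (intro summable_add summable_mult) auto
  moreover have "norm ((cmod (a k + b k))\<^sup>2) \<le> 2 * (cmod (a k))\<^sup>2 + 2 * (cmod (b k))\<^sup>2" for k
  proof -
    have "cmod (a k + b k) \<le> cmod (a k) + cmod (b k)" by (rule norm_triangle_ineq)
    hence "(cmod (a k + b k))\<^sup>2 \<le> (cmod (a k) + cmod (b k))\<^sup>2"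
      by (intro power_mono) auto
    also have "\<dots> \<le> 2 * (cmod (a k))\<^sup>2 + 2 * (cmod (b k))\<^sup>2"
      using zero_le_power2[of "cmod (a k) - cmod (b k)"] unfolding power2_diff power2_sum by linarith
    finally show ?thesis by simp
  qed
  ultimately show "summable (\<lambda>k. (cmod (a k + b k))\<^sup>2)"
    by (rule summable_comparison_test'[where N=0])
qed

lemma l2_cmult: "l2 a \<Longrightarrow> l2 (\<lambda>n. c * a n)"
  unfolding l2_def by (simp add: norm_mult power_mult_distrib summable_mult)

lemma l2_minus: "l2 a \<Longrightarrow> l2 (\<lambda>n. - a n)"
  unfolding l2_def by simp

lemma l2_diff: "l2 a \<Longrightarrow> l2 b \<Longrightarrow> l2 (\<lambda>n. a n - b n)"
  using l2_add[of a "\<lambda>n. - b n"] l2_minus[of b] by simp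

lemma l2_sh: "l2 (sh a) \<longleftrightarrow> l2 a"
proof -
  have "summable (\<lambda>k. (cmod (sh a k))\<^sup>2) \<longleftrightarrow> summable (\<lambda>k. (cmod (sh a (Suc k)))\<^sup>2)"
    by (rule summable_Suc_iff[symmetric])
  thus ?thesis by (simp add: l2_def sh_def)
qed

lemma l2_Suc: "l2 a \<Longrightarrow> l2 (\<lambda>n. a (Suc n))"
  unfolding l2_def using summable_Suc_iff[of "\<lambda>k. (cmod (a k))^2"] by simp

lemma l2_inner_summable: "l2 a \<Longrightarrow> l2 b \<Longrightarrow> summable (\<lambda>n. a n * cnj (b n))"
proof -
  assume A: "l2 a" "l2 b"
  have "summable (\<lambda>k. (cmod (a k))\<^sup>2 + (cmod (b k))\<^sup>2)"
    using A by (intro summable_add) (auto simp: l2_def)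
  moreover have "norm (a k * cnj (b k)) \<le> (cmod (a k))\<^sup>2 + (cmod (b k))\<^sup>2" for k
  proof -
    have "norm (a k * cnj (b k)) = cmod (a k) * cmod (b k)" by (simp add: norm_mult)
    also have "\<dots> \<le> (cmod (a k))\<^sup>2 + (cmod (b k))\<^sup>2"
      using zero_le_power2[of "cmod (a k) - cmod (b k)"] mult_nonneg_nonneg[OF norm_ge_zero norm_ge_zero, of "a k" "b k"]
      unfolding power2_diff by linarith
    finally show ?thesis .
  qed
  ultimately show ?thesis
    by (rule summable_comparison_test'[where N=0])
qed

lemma ps_shift:
  assumes "(\<lambda>n. a n * z ^ n) sums s"
  shows "(\<lambda>n. sh a n * z ^ n) sums (z * s)"
proof -
  have "(\<lambda>n. z * (a n * z ^ n)) sums (z * s)" using assms by (rule sums_mult)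
  hence "(\<lambda>n. sh a (Suc n) * z ^ (Suc n)) sums (z * s)"
    by (simp add: sh_def mult_ac)
  thus ?thesis by (subst (asm) sums_Suc_iff) (simp add: sh_def)
qed

lemma holo_zmul: "g holomorphic_on ball 0 1 \<Longrightarrow> (\<lambda>z. z * g z) holomorphic_on ball 0 1"
  by (intro holomorphic_intros)

lemma tc_zmul:
  assumes "g holomorphic_on ball 0 1"
  shows "tc (\<lambda>z. z * g z) k = sh (tc g) k"
  by (rule ps_tc) (rule ps_shift, rule holo_ps[OF assms])

lemma tc_add:
  assumes "f holomorphic_on ball 0 1" "g holomorphic_on ball 0 1"
  shows "tc (\<lambda>z. f z + g z) k = tc f k + tc g k"
  by (rule ps_tc) (use sums_add[OF holo_ps[OF assms(1)] holo_ps[OF assms(2)]] in \<open>simp add: distrib_right\<close>)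

lemma tc_diff:
  assumes "f holomorphic_on ball 0 1" "g holomorphic_on ball 0 1"
  shows "tc (\<lambda>z. f z - g z) k = tc f k - tc g k"
  by (rule ps_tc) (use sums_diff[OF holo_ps[OF assms(1)] holo_ps[OF assms(2)]] in \<open>simp add: left_diff_distrib\<close>)

lemma tc_cmult:
  assumes "f holomorphic_on ball 0 1"
  shows "tc (\<lambda>z. c * f z) k = c * tc f k"
  by (rule ps_tc) (use sums_mult[OF holo_ps[OF assms], of _ c] in \<open>simp add: mult_ac\<close>)

lemma tc_sum:
  assumes "\<And>i. i \<in> A \<Longrightarrow> f i holomorphic_on ball 0 1"
  shows "tc (\<lambda>z. \<Sum>i\<in>A. c i * f i z) k = (\<Sum>i\<in>A. c i * tc (f i) k)"
proof (rule ps_tc)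
  fix z :: complex assume z: "z \<in> ball 0 1"
  have "(\<lambda>n. \<Sum>i\<in>A. c i * (tc (f i) n * z ^ n)) sums (\<Sum>i\<in>A. c i * f i z)"
    by (intro sums_sum sums_mult holo_ps assms z)
  thus "(\<lambda>n. (\<Sum>i\<in>A. c i * tc (f i) n) * z ^ n) sums (\<Sum>i\<in>A. c i * f i z)"
    by (simp add: sum_distrib_left mult_ac)
qed

lemma tc_const: "tc (\<lambda>z. c) k = (if k = 0 then c else 0)"
proof (rule ps_tc)
  fix z :: complex
  have "(\<lambda>n. if n = 0 then c else 0) sums c" using sums_single[of 0 "\<lambda>_. c"] by simp
  thus "(\<lambda>n. (if n = 0 then c else 0) * z ^ n) sums c"
    by (rule sums_cong[THEN iffD1, rotated]) auto
qed

lemma tc_affine_shift: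
  assumes "g holomorphic_on ball 0 1" "\<And>z. z \<in> ball 0 1 \<Longrightarrow> f z = a + z * g z"
  shows "tc f (Suc m) = tc g m"
proof -
  have "tc f = tc (\<lambda>z. a + z * g z)" by (rule tc_cong) (use assms in auto)
  hence "tc f (Suc m) = tc (\<lambda>z. a + z * g z) (Suc m)" by simp
  also have "\<dots> = tc (\<lambda>z. a) (Suc m) + tc (\<lambda>z. z * g z) (Suc m)"
    by (rule tc_add) (auto intro!: holomorphic_intros assms(1))
  also have "\<dots> = tc g m" using tc_zmul[OF assms(1)] tc_const by (simp add: sh_def)
  finally show ?thesis .
qed


lemma sums_cnj': "f sums l \<Longrightarrow> (\<lambda>x. cnj (f x)) sums cnj l"
  by (simp add: sums_cnj)

lemma suminf_cnj: "summable f \<Longrightarrow> (\<Sum>n. cnj (f n)) = cnj (suminf f)"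
  by (rule sums_unique[symmetric]) (simp add: sums_cnj summable_sums)

lemma hardy2_holo: "f \<in> hardy2 \<Longrightarrow> f holomorphic_on ball 0 1"
  by (simp add: hardy2_iff)
lemma hardy2_l2: "f \<in> hardy2 \<Longrightarrow> l2 (tc f)"
  by (simp add: hardy2_iff)

lemma inner_summable: "f \<in> hardy2 \<Longrightarrow> g \<in> hardy2 \<Longrightarrow> summable (\<lambda>k. tc f k * cnj (tc g k))"
  by (intro l2_inner_summable hardy2_l2)

lemma hardy2_add: "f \<in> hardy2 \<Longrightarrow> g \<in> hardy2 \<Longrightarrow> (\<lambda>z. f z + g z) \<in> hardy2"
proof -
  assume A: "f \<in> hardy2" "g \<in> hardy2"
  have "tc (\<lambda>z. f z + g z) = (\<lambda>k. tc f k + tc g k)"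
    by (rule ext, rule tc_add) (use A in \<open>auto simp: hardy2_iff\<close>)
  thus ?thesis using A by (simp add: hardy2_iff holomorphic_on_add l2_add)
qed
lemma hardy2_diff: "f \<in> hardy2 \<Longrightarrow> g \<in> hardy2 \<Longrightarrow> (\<lambda>z. f z - g z) \<in> hardy2"
proof -
  assume A: "f \<in> hardy2" "g \<in> hardy2"
  have "tc (\<lambda>z. f z - g z) = (\<lambda>k. tc f k - tc g k)"
    by (rule ext, rule tc_diff) (use A in \<open>auto simp: hardy2_iff\<close>)
  thus ?thesis using A by (simp add: hardy2_iff holomorphic_on_diff l2_diff)
qed
lemma hardy2_cmult: "f \<in> hardy2 \<Longrightarrow> (\<lambda>z. c * f z) \<in> hardy2"
proof -
  assume A: "f \<in> hardy2"
  have "tc (\<lambda>z. c * f z) = (\<lambda>k. c * tc f k)"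
    by (rule ext, rule tc_cmult) (use A in \<open>auto simp: hardy2_iff\<close>)
  thus ?thesis using A by (simp add: hardy2_iff holomorphic_on_mult l2_cmult)
qed

lemma hardy2_sum: "finite A \<Longrightarrow> (\<And>i. i \<in> A \<Longrightarrow> f i \<in> hardy2) \<Longrightarrow> (\<lambda>z. \<Sum>i\<in>A. c i * f i z) \<in> hardy2"
proof (induction A rule: finite_induct)
  case empty
  have "(\<lambda>z::complex. 0::complex) \<in> hardy2"
    by (simp add: hardy2_iff tc_const l2_def)
  thus ?case by simp
next
  case (insert x F)
  have "(\<lambda>z. c x * f x z + (\<Sum>i\<in>F. c i * f i z)) \<in> hardy2"
    using insert by (intro hardy2_add hardy2_cmult) auto
  thus ?case using insert by simp
qed

lemma inner_add_left:
  assumes "f \<in> hardy2" "g \<in> hardy2" "h \<in> hardy2"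
  shows "h2_inner (\<lambda>z. f z + g z) h = h2_inner f h + h2_inner g h"
  unfolding h2_inner_def using assms
  by (simp add: tc_add hardy2_holo distrib_right suminf_add[OF inner_summable inner_summable])

lemma inner_diff_left:
  assumes "f \<in> hardy2" "g \<in> hardy2" "h \<in> hardy2"
  shows "h2_inner (\<lambda>z. f z - g z) h = h2_inner f h - h2_inner g h"
  unfolding h2_inner_def using assms
  by (simp add: tc_diff hardy2_holo left_diff_distrib suminf_diff[OF inner_summable inner_summable])

lemma inner_cmult_left:
  assumes "f \<in> hardy2" "g \<in> hardy2"
  shows "h2_inner (\<lambda>z. c * f z) g = c * h2_inner f g"
  unfolding h2_inner_def using assms
  by (simp add: tc_cmult hardy2_holo mult.assoc suminf_mult[OF inner_summable])

lemma inner_cnj: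
  assumes "f \<in> hardy2" "g \<in> hardy2"
  shows "h2_inner f g = cnj (h2_inner g f)"
  unfolding h2_inner_def using suminf_cnj[OF inner_summable[OF assms(2,1)]]
  by (simp add: mult.commute)

lemma inner_cmult_right:
  assumes "f \<in> hardy2" "g \<in> hardy2"
  shows "h2_inner f (\<lambda>z. c * g z) = cnj c * h2_inner f g"
  using inner_cnj[of f "\<lambda>z. c * g z"] inner_cmult_left[OF assms(2,1), of c] inner_cnj[OF assms]
    hardy2_cmult[OF assms(2)] assms by simp

lemma inner_sum_left:
  assumes "finite A" "\<And>i. i \<in> A \<Longrightarrow> f i \<in> hardy2" "g \<in> hardy2"
  shows "h2_inner (\<lambda>z. \<Sum>i\<in>A. c i * f i z) g = (\<Sum>i\<in>A. c i * h2_inner (f i) g)"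
proof -
  have "h2_inner (\<lambda>z. \<Sum>i\<in>A. c i * f i z) g = (\<Sum>k. \<Sum>i\<in>A. c i * (tc (f i) k * cnj (tc g k)))"
    unfolding h2_inner_def using assms
    by (simp add: tc_sum hardy2_holo sum_distrib_right mult.assoc)
  also have "\<dots> = (\<Sum>i\<in>A. \<Sum>k. c i * (tc (f i) k * cnj (tc g k)))"
    by (rule suminf_sum) (intro summable_mult inner_summable assms; simp)
  also have "\<dots> = (\<Sum>i\<in>A. c i * h2_inner (f i) g)"
    unfolding h2_inner_def
    by (intro sum.cong refl) (simp add: suminf_mult inner_summable assms)
  finally show ?thesis .
qed

lemma inner_self_zero:
  assumes "f \<in> hardy2" "h2_inner f f = 0" "z \<in> ball 0 1"
  shows "f z = 0"
proof -
  have eq: "tc f k * cnj (tc f k) = of_real ((cmod (tc f k))\<^sup>2)" for k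
    using complex_norm_square[of "tc f k"] by simp
  have S: "summable (\<lambda>k. (cmod (tc f k))\<^sup>2)" using hardy2_l2[OF assms(1)] by (simp add: l2_def)
  have "h2_inner f f = of_real (\<Sum>k. (cmod (tc f k))\<^sup>2)"
    unfolding h2_inner_def eq by (rule suminf_of_real[OF S, symmetric])
  hence "(\<Sum>k. (cmod (tc f k))\<^sup>2) = 0" using assms(2) by simp
  hence "\<forall>k. (cmod (tc f k))\<^sup>2 = 0" using suminf_eq_zero_iff[OF S] by simp
  hence Z: "\<And>k. tc f k = 0" by simp
  have "(\<lambda>n. tc f n * z ^ n) sums f z" by (rule holo_ps[OF hardy2_holo[OF assms(1)] assms(3)])
  hence "(\<lambda>n. 0) sums f z" by (simp add: Z)
  thus ?thesis using sums_zero sums_unique2 by blast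
qed

lemma bshift_eq: "bshift f = (\<lambda>z. if z = 0 then deriv f 0 else (f z - f 0) / (z - 0))"
  by (auto simp: bshift_def)

lemma bshift_holo: "f holomorphic_on ball 0 1 \<Longrightarrow> bshift f holomorphic_on ball 0 1"
  unfolding bshift_eq by (rule pole_lemma_open) auto

lemma tc_bshift:
  assumes "f holomorphic_on ball 0 1"
  shows "tc (bshift f) m = tc f (Suc m)"
  by (rule tc_affine_shift[symmetric, OF bshift_holo[OF assms], of _ "f 0"]) (auto simp: bshift_def)

lemma hardy2_bshift: "f \<in> hardy2 \<Longrightarrow> bshift f \<in> hardy2"
proof -
  assume A: "f \<in> hardy2"
  have "tc (bshift f) = (\<lambda>k. tc f (Suc k))"
    by (rule ext, rule tc_bshift) (use A in \<open>auto simp: hardy2_iff\<close>)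
  thus ?thesis using A by (simp add: hardy2_iff bshift_holo l2_Suc)
qed

definition kern :: "complex \<Rightarrow> complex \<Rightarrow> complex" where
  "kern w z = 1 / (1 - cnj w * z)"

lemma kern_ps:
  assumes "cmod w < 1" "z \<in> ball 0 1"
  shows "(\<lambda>n. cnj w ^ n * z ^ n) sums kern w z"
proof -
  have "cmod (cnj w * z) < 1"
    using assms by (simp add: norm_mult) (metis mult_strict_mono' norm_ge_zero mult_1_left less_le_trans order.strict_implies_order mult_le_one)
  from geometric_sums[OF this] show ?thesis by (simp add: kern_def power_mult_distrib)
qed

lemma tc_kern: "cmod w < 1 \<Longrightarrow> tc (kern w) n = cnj w ^ n"
  by (rule ps_tc) (rule kern_ps)

lemma kern_holo: "cmod w < 1 \<Longrightarrow> kern w holomorphic_on ball 0 1"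
  by (rule ps_holo) (rule kern_ps)

lemma kern_hardy2: "cmod w < 1 \<Longrightarrow> kern w \<in> hardy2"
proof -
  assume w: "cmod w < 1"
  have "summable (\<lambda>n. (cmod w ^ 2) ^ n)"
    using w by (intro summable_geometric) (simp add: power_less_one_iff)
  thus ?thesis using w by (simp add: hardy2_iff kern_holo tc_kern l2_def norm_power power_mult[symmetric] mult.commute)
qed

lemma inner_kern:
  assumes "f holomorphic_on ball 0 1" "cmod w < 1"
  shows "h2_inner f (kern w) = f w"
proof -
  have "(\<lambda>n. tc f n * w ^ n) sums f w" using holo_ps[OF assms(1)] assms(2) by simp
  thus ?thesis unfolding h2_inner_def using assms(2) by (simp add: tc_kern sums_iff)
qed


definition bl :: "complex \<Rightarrow> complex \<Rightarrow> complex" where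
  "bl a z = (z - a) / (1 - cnj a * z)"

lemma den_nz: "cmod a < 1 \<Longrightarrow> z \<in> ball 0 1 \<Longrightarrow> 1 - cnj a * z \<noteq> 0"
proof
  assume "cmod a < 1" "z \<in> ball 0 1" "1 - cnj a * z = 0"
  hence "cnj a * z = 1" by simp
  hence "cmod a * cmod z = 1" by (metis complex_mod_cnj norm_mult norm_one)
  moreover have "cmod a * cmod z \<le> cmod a" using \<open>z \<in> ball 0 1\<close>
    by (intro mult_left_le) auto
  ultimately show False using \<open>cmod a < 1\<close> by simp
qed

lemma bl_holo: "cmod a < 1 \<Longrightarrow> bl a holomorphic_on ball 0 1"
  unfolding bl_def[abs_def] by (intro holomorphic_intros) (auto dest: den_nz)

lemma sum_sh_le: "(\<Sum>k\<le>N. (cmod (sh u k))\<^sup>2) \<le> (\<Sum>k\<le>N. (cmod (u k))\<^sup>2)"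
proof (cases N)
  case 0 thus ?thesis by (simp add: sh_def)
next
  case (Suc M)
  have "(\<Sum>k\<le>N. (cmod (sh u k))\<^sup>2) = (\<Sum>k\<le>M. (cmod (u k))\<^sup>2)"
    unfolding Suc sum.atMost_Suc_shift by (simp add: sh_def)
  also have "\<dots> \<le> (\<Sum>k\<le>N. (cmod (u k))\<^sup>2)"
    unfolding Suc by simp
  finally show ?thesis .
qed

lemma L2_sh_le: "L2_set (\<lambda>k. cmod (sh u k)) {..N} \<le> L2_set (\<lambda>k. cmod (u k)) {..N}"
  unfolding L2_set_def using sum_sh_le by simp

lemma l2_recur:
  assumes f: "l2 f" and a: "cmod a < 1"
    and rec: "\<And>k. u k = f k + a * sh u k"
  shows "l2 u"
proof -
  define F where "F = sqrt (\<Sum>k. (cmod (f k))\<^sup>2)"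
  have Fs: "summable (\<lambda>k. (cmod (f k))\<^sup>2)" using f by (simp add: l2_def)
  have bnd: "L2_set (\<lambda>k. cmod (u k)) {..N} \<le> F / (1 - cmod a)" for N
  proof -
    let ?U = "L2_set (\<lambda>k. cmod (u k)) {..N}"
    have "?U \<le> L2_set (\<lambda>k. cmod (f k) + cmod a * cmod (sh u k)) {..N}"
    proof (rule L2_set_mono)
      fix i show "cmod (u i) \<le> cmod (f i) + cmod a * cmod (sh u i)"
        using norm_triangle_ineq[of "f i" "a * sh u i"] rec[of i] by (simp add: norm_mult)
    qed simp
    also have "\<dots> \<le> L2_set (\<lambda>k. cmod (f k)) {..N} + L2_set (\<lambda>k. cmod a * cmod (sh u k)) {..N}"
      by (rule L2_set_triangle_ineq)
    also have "L2_set (\<lambda>k. cmod a * cmod (sh u k)) {..N} = cmod a * L2_set (\<lambda>k. cmod (sh u k)) {..N}"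
      by (rule L2_set_right_distrib[symmetric]) simp
    also have "\<dots> \<le> cmod a * ?U"
      by (intro mult_left_mono L2_sh_le) simp
    also have "L2_set (\<lambda>k. cmod (f k)) {..N} \<le> F"
      unfolding L2_set_def F_def
      by (intro real_sqrt_le_mono sum_le_suminf Fs) auto
    finally have "?U \<le> F + cmod a * ?U" by simp
    hence "(1 - cmod a) * ?U \<le> F" by (simp add: algebra_simps)
    thus ?thesis using a by (simp add: field_simps)
  qed
  have "(\<Sum>k\<le>N. (cmod (u k))\<^sup>2) \<le> (F / (1 - cmod a))\<^sup>2" for N
  proof -
    have "(\<Sum>k\<le>N. (cmod (u k))\<^sup>2) = (L2_set (\<lambda>k. cmod (u k)) {..N})\<^sup>2"
      unfolding L2_set_def by (simp add: sum_nonneg)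
    also have "\<dots> \<le> (F / (1 - cmod a))\<^sup>2"
      by (intro power_mono bnd) (simp add: L2_set_def sum_nonneg)
    finally show ?thesis .
  qed
  thus ?thesis unfolding l2_def by (intro bounded_imp_summable) auto
qed

lemma bl_mult:
  assumes a: "cmod a < 1" and f: "f \<in> hardy2"
  obtains u where "l2 (tc u)" "\<And>k. tc f k = tc u k - cnj a * sh (tc u) k"
    "\<And>k. tc (\<lambda>z. bl a z * f z) k = sh (tc u) k - a * tc u k"
proof -
  define u where "u = (\<lambda>z. f z / (1 - cnj a * z))"
  have fh: "f holomorphic_on ball 0 1" using f by (rule hardy2_holo)
  have uh: "u holomorphic_on ball 0 1" unfolding u_def
    by (intro holomorphic_intros fh) (metis den_nz[OF a])
  have zuh: "(\<lambda>z. z * u z) holomorphic_on ball 0 1" by (intro holomorphic_intros uh)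
  have e1: "tc f k = tc u k - cnj a * sh (tc u) k" for k
  proof -
    have "tc f = tc (\<lambda>z. u z - cnj a * (z * u z))"
    proof (rule tc_cong)
      fix z :: complex assume z: "z \<in> ball 0 1"
      have nz: "1 - cnj a * z \<noteq> 0" by (rule den_nz[OF a z])
      have "u z - cnj a * (z * u z) = (1 - cnj a * z) * u z" by (simp add: algebra_simps)
      also have "\<dots> = f z" using nz by (simp add: u_def)
      finally show "f z = u z - cnj a * (z * u z)" by simp
    qed
    hence "tc f k = tc (\<lambda>z. u z - cnj a * (z * u z)) k" by simp
    also have "\<dots> = tc u k - tc (\<lambda>z. cnj a * (z * u z)) k"
      by (rule tc_diff) (intro holomorphic_intros uh)+
    also have "tc (\<lambda>z. cnj a * (z * u z)) k = cnj a * sh (tc u) k"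
      by (simp add: tc_cmult[OF zuh] tc_zmul[OF uh])
    finally show ?thesis .
  qed
  have e2: "tc (\<lambda>z. bl a z * f z) k = sh (tc u) k - a * tc u k" for k
  proof -
    have "tc (\<lambda>z. bl a z * f z) = tc (\<lambda>z. z * u z - a * u z)"
    proof (rule tc_cong)
      fix z :: complex assume z: "z \<in> ball 0 1"
      have "1 - cnj a * z \<noteq> 0" by (rule den_nz[OF a z])
      have "z * u z - a * u z = (z - a) * u z" by (simp add: algebra_simps)
      also have "\<dots> = bl a z * f z" by (simp add: u_def bl_def)
      finally show "bl a z * f z = z * u z - a * u z" by simp
    qed
    hence "tc (\<lambda>z. bl a z * f z) k = tc (\<lambda>z. z * u z - a * u z) k" by simp
    also have "\<dots> = tc (\<lambda>z. z * u z) k - tc (\<lambda>z. a * u z) k"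
      by (rule tc_diff) (intro holomorphic_intros uh)+
    also have "\<dots> = sh (tc u) k - a * tc u k"
      by (simp add: tc_cmult[OF uh] tc_zmul[OF uh])
    finally show ?thesis .
  qed
  have "l2 (tc u)"
    by (rule l2_recur[OF hardy2_l2[OF f], of "cnj a"]) (use a e1 in auto)
  thus ?thesis using that e1 e2 by blast
qed

lemma bl_hardy2:
  assumes a: "cmod a < 1" and f: "f \<in> hardy2"
  shows "(\<lambda>z. bl a z * f z) \<in> hardy2"
proof -
  obtain u where u: "l2 (tc u)" "\<And>k. tc (\<lambda>z. bl a z * f z) k = sh (tc u) k - a * tc u k"
    using bl_mult[OF a f] by metis
  have "tc (\<lambda>z. bl a z * f z) = (\<lambda>k. sh (tc u) k - a * tc u k)" using u(2) by auto
  moreover have "(\<lambda>z. bl a z * f z) holomorphic_on ball 0 1"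
    by (intro holomorphic_on_mult bl_holo a hardy2_holo f)
  ultimately show ?thesis using u(1)
    by (simp add: hardy2_iff l2_diff l2_cmult l2_sh)
qed

lemma suminf_sh:
  assumes "summable (\<lambda>n. U n * cnj (V n))"
  shows "(\<lambda>n. sh U n * cnj (sh V n)) sums (\<Sum>n. U n * cnj (V n))"
proof -
  have "(\<lambda>n. sh U (Suc n) * cnj (sh V (Suc n))) sums (\<Sum>n. U n * cnj (V n))"
    using summable_sums[OF assms] by (simp add: sh_def)
  thus ?thesis by (subst (asm) sums_Suc_iff) (simp add: sh_def)
qed

lemma bl_iso:
  assumes a: "cmod a < 1" and f: "f \<in> hardy2" and g: "g \<in> hardy2"
  shows "h2_inner (\<lambda>z. bl a z * f z) (\<lambda>z. bl a z * g z) = h2_inner f g"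
proof -
  obtain u where u: "l2 (tc u)" "\<And>k. tc f k = tc u k - cnj a * sh (tc u) k"
    "\<And>k. tc (\<lambda>z. bl a z * f z) k = sh (tc u) k - a * tc u k"
    using bl_mult[OF a f] by metis
  obtain v where v: "l2 (tc v)" "\<And>k. tc g k = tc v k - cnj a * sh (tc v) k"
    "\<And>k. tc (\<lambda>z. bl a z * g z) k = sh (tc v) k - a * tc v k"
    using bl_mult[OF a g] by metis
  define U where "U = tc u"
  define V where "V = tc v"
  have lU: "l2 U" "l2 (sh U)" and lV: "l2 V" "l2 (sh V)" using u v by (auto simp: U_def V_def l2_sh)
  define SQ where "SQ = (\<Sum>n. U n * cnj (V n))"
  define SR where "SR = (\<Sum>n. sh U n * cnj (V n))"
  define ST where "ST = (\<Sum>n. U n * cnj (sh V n))"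
  have sQ: "(\<lambda>n. U n * cnj (V n)) sums SQ" unfolding SQ_def
    by (intro summable_sums l2_inner_summable lU lV)
  have sP: "(\<lambda>n. sh U n * cnj (sh V n)) sums SQ" unfolding SQ_def
    by (intro suminf_sh l2_inner_summable lU lV)
  have sR: "(\<lambda>n. sh U n * cnj (V n)) sums SR" unfolding SR_def
    by (intro summable_sums l2_inner_summable lU lV)
  have sT: "(\<lambda>n. U n * cnj (sh V n)) sums ST" unfolding ST_def
    by (intro summable_sums l2_inner_summable lU lV)
  have L: "(\<lambda>n. (sh U n - a * U n) * cnj (sh V n - a * V n)) sums
            (SQ - cnj a * SR - a * ST + a * cnj a * SQ)"
  proof -
    have "(\<lambda>n. sh U n * cnj (sh V n) - cnj a * (sh U n * cnj (V n)) - a * (U n * cnj (sh V n))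
             + a * cnj a * (U n * cnj (V n))) sums (SQ - cnj a * SR - a * ST + a * cnj a * SQ)"
      by (intro sums_add sums_diff sums_mult sP sQ sR sT)
    thus ?thesis by (simp add: algebra_simps)
  qed
  have R: "(\<lambda>n. (U n - cnj a * sh U n) * cnj (V n - cnj a * sh V n)) sums
            (SQ - a * ST - cnj a * SR + cnj a * a * SQ)"
  proof -
    have "(\<lambda>n. U n * cnj (V n) - a * (U n * cnj (sh V n)) - cnj a * (sh U n * cnj (V n))
             + cnj a * a * (sh U n * cnj (sh V n))) sums (SQ - a * ST - cnj a * SR + cnj a * a * SQ)"
      by (intro sums_add sums_diff sums_mult sP sQ sR sT)
    thus ?thesis by (simp add: algebra_simps)
  qed
  have "h2_inner (\<lambda>z. bl a z * f z) (\<lambda>z. bl a z * g z) = SQ - cnj a * SR - a * ST + a * cnj a * SQ"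
    unfolding h2_inner_def using L by (simp add: u(3) v(3) U_def V_def sums_iff)
  also have "\<dots> = SQ - a * ST - cnj a * SR + cnj a * a * SQ" by simp
  also have "\<dots> = h2_inner f g"
    unfolding h2_inner_def using R by (simp add: u(2) v(2) U_def V_def sums_iff)
  finally show ?thesis .
qed

lemma blp_hardy2:
  assumes a: "cmod a < 1" and f: "f \<in> hardy2"
  shows "(\<lambda>z. bl a z ^ m * f z) \<in> hardy2"
proof (induction m)
  case 0 thus ?case using f by simp
next
  case (Suc m)
  from bl_hardy2[OF a Suc] show ?case by (simp add: mult.assoc)
qed

lemma blp_iso:
  assumes a: "cmod a < 1" and f: "f \<in> hardy2" and g: "g \<in> hardy2"
  shows "h2_inner (\<lambda>z. bl a z ^ m * f z) (\<lambda>z. bl a z ^ m * g z) = h2_inner f g"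
proof (induction m)
  case 0 thus ?case by simp
next
  case (Suc m)
  from bl_iso[OF a blp_hardy2[OF a f, of m] blp_hardy2[OF a g, of m]] Suc
  show ?case by (simp add: mult.assoc)
qed


lemma sum_shift1: "(\<Sum>k=1..Suc n. g k) = g 1 + (\<Sum>k=1..n. g (Suc k))"
proof -
  have "(\<Sum>k=1..Suc n. g k) = g 1 + (\<Sum>k=Suc 1..Suc n. g k)"
    by (rule sum.atLeast_Suc_atMost) simp
  also have "(\<Sum>k=Suc 1..Suc n. g k) = (\<Sum>k=1..n. g (Suc k))"
    by (rule sum.shift_bounds_cl_Suc_ivl)
  finally show ?thesis .
qed

lemma inner_cong:
  assumes "\<And>z. z \<in> ball 0 1 \<Longrightarrow> f z = f' z" "\<And>z. z \<in> ball 0 1 \<Longrightarrow> g z = g' z"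
  shows "h2_inner f g = h2_inner f' g'"
  unfolding h2_inner_def using tc_cong[OF assms(1)] tc_cong[OF assms(2)] by simp

lemma bl_self: "bl a a = 0" by (simp add: bl_def)

lemma blaschke_pow_eq: "blaschke_pow a n = (\<lambda>z. bl a z ^ n)"
  by (simp add: blaschke_pow_def bl_def fun_eq_iff)

definition cc :: "complex \<Rightarrow> real" where "cc a = sqrt (1 - (cmod a)\<^sup>2)"

lemma e1_eq: "ebasis a 1 = (\<lambda>z. of_real (cc a) * kern a z)"
  by (simp add: ebasis_def kern_def cc_def fun_eq_iff)

lemma eSuc: "ebasis a (Suc k) = (\<lambda>z. bl a z ^ k * ebasis a 1 z)"
  by (simp add: ebasis_def bl_def fun_eq_iff mult.commute)

lemma eSuc': "k \<ge> 1 \<Longrightarrow> ebasis a (Suc k) z = bl a z * ebasis a k z"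
proof -
  assume "k \<ge> 1"
  then obtain m where m: "k = Suc m" by (cases k) auto
  show ?thesis unfolding m eSuc by (simp only: power_Suc mult.assoc)
qed

lemma e1_H: "cmod a < 1 \<Longrightarrow> ebasis a 1 \<in> hardy2"
  unfolding e1_eq by (intro hardy2_cmult kern_hardy2)

lemma ek_H: "cmod a < 1 \<Longrightarrow> k \<ge> 1 \<Longrightarrow> ebasis a k \<in> hardy2"
proof -
  assume a: "cmod a < 1" and "k \<ge> 1"
  then obtain m where m: "k = Suc m" by (cases k) auto
  show ?thesis unfolding m eSuc by (intro blp_hardy2 e1_H a)
qed

lemma inner_e1: "cmod a < 1 \<Longrightarrow> f \<in> hardy2 \<Longrightarrow> h2_inner f (ebasis a 1) = of_real (cc a) * f a"
  unfolding e1_eq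
  by (subst inner_cmult_right) (auto intro: kern_hardy2 simp: inner_kern hardy2_holo)

lemma cc_e1: "cmod a < 1 \<Longrightarrow> of_real (cc a) * ebasis a 1 a = 1"
proof -
  assume a: "cmod a < 1"
  have pos: "0 < 1 - (cmod a)\<^sup>2" using a by (simp add: abs_square_less_1)
  have "cnj a * a = of_real ((cmod a)\<^sup>2)" using complex_norm_square[of a] by (simp add: mult.commute)
  hence D: "1 - cnj a * a = of_real (1 - (cmod a)\<^sup>2)" by simp
  have C: "of_real (cc a) * of_real (cc a) = (of_real (1 - (cmod a)\<^sup>2) :: complex)"
    using pos unfolding cc_def by (simp flip: of_real_mult)
  have E: "ebasis a 1 a = of_real (cc a) / (1 - cnj a * a)" by (simp add: ebasis_def cc_def)
  have "of_real (cc a) * ebasis a 1 a = (of_real (cc a) * of_real (cc a)) / (1 - cnj a * a)"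
    unfolding E by simp
  also have "\<dots> = 1" unfolding C D
  proof (rule divide_self)
    show "(of_real (1 - (cmod a)\<^sup>2) :: complex) \<noteq> 0" unfolding of_real_eq_0_iff using pos by linarith
  qed
  finally show ?thesis .
qed

lemma ortho_lt:
  assumes a: "cmod a < 1" and pq: "p < q"
  shows "h2_inner (ebasis a (Suc p)) (ebasis a (Suc q)) = 0"
proof -
  let ?G = "\<lambda>z. bl a z ^ (q - p) * ebasis a 1 z"
  have GH: "?G \<in> hardy2" by (intro blp_hardy2 a e1_H)
  have eq: "(\<lambda>z. bl a z ^ q * ebasis a 1 z) = (\<lambda>z. bl a z ^ p * ?G z)"
    using pq by (simp add: fun_eq_iff mult.assoc[symmetric] power_add[symmetric])
  have "h2_inner (ebasis a (Suc p)) (ebasis a (Suc q)) = h2_inner (ebasis a 1) ?G"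
    unfolding eSuc eq by (rule blp_iso[OF a e1_H[OF a] GH])
  also have "\<dots> = cnj (h2_inner ?G (ebasis a 1))" by (rule inner_cnj[OF e1_H[OF a] GH])
  also have "h2_inner ?G (ebasis a 1) = of_real (cc a) * ?G a" by (rule inner_e1[OF a GH])
  also have "cnj (of_real (cc a) * ?G a) = 0" using pq by (simp add: bl_self)
  finally show ?thesis .
qed

lemma ortho:
  assumes a: "cmod a < 1" and j: "j \<ge> 1" and k: "k \<ge> 1"
  shows "h2_inner (ebasis a j) (ebasis a k) = (if j = k then 1 else 0)"
proof -
  obtain p where p: "j = Suc p" using j by (cases j) auto
  obtain q where q: "k = Suc q" using k by (cases k) auto
  consider "p < q" | "p = q" | "q < p" by linarith
  thus ?thesis
  proof cases
    case 1 thus ?thesis using ortho_lt[OF a 1] p q 1 by simp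
  next
    case 3
    have "h2_inner (ebasis a j) (ebasis a k) = cnj (h2_inner (ebasis a k) (ebasis a j))"
      by (rule inner_cnj) (intro ek_H a j k)+
    thus ?thesis using ortho_lt[OF a 3] p q 3 by simp
  next
    case 2
    have "h2_inner (ebasis a j) (ebasis a k) = h2_inner (ebasis a 1) (ebasis a 1)"
      unfolding p q eSuc 2 by (rule blp_iso[OF a e1_H[OF a] e1_H[OF a]])
    also have "\<dots> = of_real (cc a) * ebasis a 1 a" by (rule inner_e1[OF a e1_H[OF a]])
    also have "\<dots> = 1" by (rule cc_e1[OF a])
    finally show ?thesis using 2 p q by simp
  qed
qed

lemma e_model:
  assumes a: "cmod a < 1" and k: "k \<in> {1..n}"
  shows "ebasis a k \<in> model_space (blaschke_pow a n)"
  unfolding model_space_def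
proof (intro CollectI conjI ballI)
  show "ebasis a k \<in> hardy2" using k by (intro ek_H a) auto
  fix g assume g: "g \<in> hardy2"
  obtain p where p: "k = Suc p" "p < n" using k by (cases k) auto
  let ?G = "\<lambda>z. bl a z ^ (n - p) * g z"
  have GH: "?G \<in> hardy2" by (intro blp_hardy2 a g)
  have eq: "(\<lambda>z. blaschke_pow a n z * g z) = (\<lambda>z. bl a z ^ p * ?G z)"
    using p by (simp add: blaschke_pow_eq fun_eq_iff mult.assoc[symmetric] power_add[symmetric])
  have "h2_inner (ebasis a k) (\<lambda>z. blaschke_pow a n z * g z) = h2_inner (ebasis a 1) ?G"
    unfolding eq p(1) eSuc by (rule blp_iso[OF a e1_H[OF a] GH])
  also have "\<dots> = cnj (h2_inner ?G (ebasis a 1))" by (rule inner_cnj[OF e1_H[OF a] GH])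
  also have "h2_inner ?G (ebasis a 1) = of_real (cc a) * ?G a" by (rule inner_e1[OF a GH])
  also have "cnj (of_real (cc a) * ?G a) = 0" using p by (simp add: bl_self)
  finally show "h2_inner (ebasis a k) (\<lambda>z. blaschke_pow a n z * g z) = 0" .
qed


lemma l2_recur2:
  assumes f: "l2 f" and a: "cmod a < 1" and B: "\<And>k. cmod (Q k) \<le> B"
    and rec: "\<And>k. Q k = f k + a * Q (Suc k)"
  shows "l2 Q"
proof -
  define F where "F = sqrt (\<Sum>k. (cmod (f k))\<^sup>2)"
  have Fs: "summable (\<lambda>k. (cmod (f k))\<^sup>2)" using f by (simp add: l2_def)
  have B0: "0 \<le> B" using B[of 0] norm_ge_zero order.trans by blast
  have bnd: "L2_set (\<lambda>k. cmod (Q k)) {..N} \<le> (F + cmod a * B) / (1 - cmod a)" for N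
  proof -
    let ?U = "L2_set (\<lambda>k. cmod (Q k)) {..N}"
    have "?U \<le> L2_set (\<lambda>k. cmod (f k) + cmod a * cmod (Q (Suc k))) {..N}"
    proof (rule L2_set_mono)
      fix i show "cmod (Q i) \<le> cmod (f i) + cmod a * cmod (Q (Suc i))"
        using norm_triangle_ineq[of "f i" "a * Q (Suc i)"] rec[of i] by (simp add: norm_mult)
    qed simp
    also have "\<dots> \<le> L2_set (\<lambda>k. cmod (f k)) {..N} + L2_set (\<lambda>k. cmod a * cmod (Q (Suc k))) {..N}"
      by (rule L2_set_triangle_ineq)
    also have "L2_set (\<lambda>k. cmod a * cmod (Q (Suc k))) {..N} = cmod a * L2_set (\<lambda>k. cmod (Q (Suc k))) {..N}"
      by (rule L2_set_right_distrib[symmetric]) simp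
    also have "L2_set (\<lambda>k. cmod (Q (Suc k))) {..N} \<le> ?U + B"
    proof -
      have "(\<Sum>k\<le>N. (cmod (Q (Suc k)))\<^sup>2) \<le> (\<Sum>k\<le>Suc N. (cmod (Q k))\<^sup>2)"
        unfolding sum.atMost_Suc_shift by simp
      also have "\<dots> = (\<Sum>k\<le>N. (cmod (Q k))\<^sup>2) + (cmod (Q (Suc N)))\<^sup>2"
        by simp
      finally have "L2_set (\<lambda>k. cmod (Q (Suc k))) {..N} \<le> sqrt ((\<Sum>k\<le>N. (cmod (Q k))\<^sup>2) + (cmod (Q (Suc N)))\<^sup>2)"
        unfolding L2_set_def by (intro real_sqrt_le_mono)
      also have "\<dots> \<le> ?U + sqrt ((cmod (Q (Suc N)))\<^sup>2)"
        unfolding L2_set_def by (intro sqrt_add_le_add_sqrt sum_nonneg) auto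
      also have "sqrt ((cmod (Q (Suc N)))\<^sup>2) \<le> B" using B by simp
      finally show ?thesis by simp
    qed
    hence "cmod a * L2_set (\<lambda>k. cmod (Q (Suc k))) {..N} \<le> cmod a * (?U + B)"
      by (intro mult_left_mono) auto
    also have "L2_set (\<lambda>k. cmod (f k)) {..N} \<le> F"
      unfolding L2_set_def F_def
      by (intro real_sqrt_le_mono sum_le_suminf Fs) auto
    finally have "?U \<le> F + cmod a * (?U + B)" by simp
    hence "(1 - cmod a) * ?U \<le> F + cmod a * B" by (simp add: algebra_simps)
    thus ?thesis using a by (simp add: field_simps)
  qed
  have "(\<Sum>k\<le>N. (cmod (Q k))\<^sup>2) \<le> ((F + cmod a * B) / (1 - cmod a))\<^sup>2" for N
  proof -
    have "(\<Sum>k\<le>N. (cmod (Q k))\<^sup>2) = (L2_set (\<lambda>k. cmod (Q k)) {..N})\<^sup>2"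
      unfolding L2_set_def by (simp add: sum_nonneg)
    also have "\<dots> \<le> ((F + cmod a * B) / (1 - cmod a))\<^sup>2"
      by (intro power_mono bnd) (simp add: L2_set_def sum_nonneg)
    finally show ?thesis .
  qed
  thus ?thesis unfolding l2_def by (intro bounded_imp_summable) auto
qed

lemma bound_Q:
  assumes a0: "a \<noteq> 0" and a: "cmod a < 1" and M: "\<And>j. cmod (f j) \<le> M"
    and rec: "\<And>k. Q k = f (Suc k) + a * Q (Suc k)"
    and lim: "(\<lambda>j. Q j * a ^ j) \<longlonglongrightarrow> 0"
  shows "cmod (Q k) \<le> M / (1 - cmod a)"
proof -
  have M0: "0 \<le> M" using M[of 0] norm_ge_zero order.trans by blast
  have iter: "Q k = (\<Sum>i<m. a ^ i * f (Suc (k + i))) + a ^ m * Q (k + m)" for m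
  proof (induction m)
    case 0 thus ?case by simp
  next
    case (Suc m)
    have "a ^ m * Q (k + m) = a ^ m * f (Suc (k + m)) + a ^ Suc m * Q (k + Suc m)"
      by (subst rec) (simp add: algebra_simps)
    with Suc show ?case by simp
  qed
  have geo: "(\<Sum>i<m. cmod a ^ i) \<le> 1 / (1 - cmod a)" for m
  proof -
    have "(\<Sum>i<m. cmod a ^ i) = (1 - cmod a ^ m) / (1 - cmod a)"
      using a by (subst sum_gp_strict) auto
    also have "\<dots> \<le> 1 / (1 - cmod a)" using a by (intro divide_right_mono) auto
    finally show ?thesis .
  qed
  have le: "cmod (Q k) \<le> M / (1 - cmod a) + cmod a ^ m * cmod (Q (k + m))" for m
  proof -
    have "cmod (Q k) \<le> cmod (\<Sum>i<m. a ^ i * f (Suc (k + i))) + cmod (a ^ m * Q (k + m))"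
      by (subst iter[of m]) (rule norm_triangle_ineq)
    also have "cmod (\<Sum>i<m. a ^ i * f (Suc (k + i))) \<le> (\<Sum>i<m. cmod a ^ i * M)"
      by (rule order.trans[OF norm_sum sum_mono]) (auto simp: norm_mult norm_power intro: mult_left_mono M)
    also have "\<dots> = M * (\<Sum>i<m. cmod a ^ i)" by (simp add: sum_distrib_left mult.commute)
    also have "\<dots> \<le> M * (1 / (1 - cmod a))" by (intro mult_left_mono geo M0)
    finally show ?thesis by (simp add: norm_mult norm_power)
  qed
  have "(\<lambda>m. cmod (Q (m + k) * a ^ (m + k)) / cmod a ^ k) \<longlonglongrightarrow> 0"
    by (intro tendsto_divide_zero tendsto_norm_zero LIMSEQ_ignore_initial_segment lim)
  moreover have "cmod (Q (m + k) * a ^ (m + k)) / cmod a ^ k = cmod a ^ m * cmod (Q (k + m))" for m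
    using a0 by (simp add: norm_mult norm_power power_add add.commute)
  ultimately have "(\<lambda>m. cmod a ^ m * cmod (Q (k + m))) \<longlonglongrightarrow> 0" by simp
  hence "(\<lambda>m. M / (1 - cmod a) + cmod a ^ m * cmod (Q (k + m))) \<longlonglongrightarrow> M / (1 - cmod a) + 0"
    by (intro tendsto_add tendsto_const)
  hence L: "(\<lambda>m. M / (1 - cmod a) + cmod a ^ m * cmod (Q (k + m))) \<longlonglongrightarrow> M / (1 - cmod a)" by simp
  show ?thesis using LIMSEQ_le_const[OF L, of "cmod (Q k)"] le by blast
qed

lemma division:
  assumes a: "cmod a < 1" and f: "f \<in> hardy2" and fa: "f a = 0"
  obtains g where "g \<in> hardy2" "\<And>z. z \<in> ball 0 1 \<Longrightarrow> f z = bl a z * g z"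
proof -
  have fh: "f holomorphic_on ball 0 1" by (rule hardy2_holo[OF f])
  define q where "q = (\<lambda>z. if z = a then deriv f a else (f z - f a) / (z - a))"
  have qh: "q holomorphic_on ball 0 1" unfolding q_def by (rule pole_lemma_open[OF fh]) auto
  have feq: "f z = z * q z - a * q z" for z
  proof (cases "z = a")
    case True thus ?thesis using fa by simp
  next
    case False
    have "z * q z - a * q z = (z - a) * q z" by (simp add: algebra_simps)
    also have "\<dots> = f z" using False fa by (simp add: q_def)
    finally show ?thesis by simp
  qed
  define Q where "Q = tc q"
  have tcf: "tc f k = sh Q k - a * Q k" for k
  proof -
    have "tc f = tc (\<lambda>z. z * q z - a * q z)" by (rule tc_cong) (rule feq)
    hence "tc f k = tc (\<lambda>z. z * q z - a * q z) k" by simp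
    also have "\<dots> = tc (\<lambda>z. z * q z) k - tc (\<lambda>z. a * q z) k"
      by (rule tc_diff) (intro holomorphic_intros qh)+
    also have "\<dots> = sh Q k - a * Q k" by (simp add: tc_zmul[OF qh] tc_cmult[OF qh] Q_def)
    finally show ?thesis .
  qed
  have rec: "Q k = tc f (Suc k) + a * Q (Suc k)" for k
    using tcf[of "Suc k"] by (simp add: sh_def)
  have lf: "l2 (tc f)" by (rule hardy2_l2[OF f])
  have lQ: "l2 Q"
  proof (cases "a = 0")
    case True
    have "Q = (\<lambda>k. tc f (Suc k))" using rec True by auto
    thus ?thesis using l2_Suc[OF lf] by simp
  next
    case False
    define M where "M = sqrt (\<Sum>k. (cmod (tc f k))\<^sup>2)"
    have Ms: "summable (\<lambda>k. (cmod (tc f k))\<^sup>2)" using lf by (simp add: l2_def)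
    have M: "cmod (tc f j) \<le> M" for j
    proof -
      have "(cmod (tc f j))\<^sup>2 \<le> (\<Sum>k. (cmod (tc f k))\<^sup>2)"
        using sum_le_suminf[OF Ms, of "{j}"] by simp
      thus ?thesis unfolding M_def by (metis real_le_rsqrt)
    qed
    have "summable (\<lambda>n. Q n * a ^ n)"
      using holo_ps[OF qh, of a] a by (simp add: Q_def sums_iff)
    hence lim: "(\<lambda>j. Q j * a ^ j) \<longlonglongrightarrow> 0" by (rule summable_LIMSEQ_zero)
    have B: "cmod (Q k) \<le> M / (1 - cmod a)" for k
      by (rule bound_Q[OF False a M rec lim])
    show ?thesis by (rule l2_recur2[OF l2_Suc[OF lf] a B rec])
  qed
  define g where "g = (\<lambda>z. q z - cnj a * (z * q z))"
  have gh: "g holomorphic_on ball 0 1" unfolding g_def by (intro holomorphic_intros qh)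
  have tcg: "tc g k = Q k - cnj a * sh Q k" for k
    unfolding g_def
    by (subst tc_diff) (auto intro!: holomorphic_intros qh simp: tc_cmult[OF holo_zmul[OF qh]] tc_zmul[OF qh] Q_def)
  have "tc g = (\<lambda>k. Q k - cnj a * sh Q k)" using tcg by auto
  hence gH: "g \<in> hardy2" using gh lQ by (simp add: hardy2_iff l2_diff l2_cmult l2_sh)
  have "f z = bl a z * g z" if z: "z \<in> ball 0 1" for z
  proof -
    have nz: "1 - cnj a * z \<noteq> 0" by (rule den_nz[OF a z])
    have "g z = (1 - cnj a * z) * q z" by (simp add: g_def algebra_simps)
    hence bg: "bl a z * g z = (z - a) * q z" using nz by (simp add: bl_def)
    have "f z = (z - a) * q z" using feq[of z] by (simp add: algebra_simps)
    thus ?thesis using bg by simp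
  qed
  thus ?thesis using that gH by blast
qed


lemma model_H: "f \<in> model_space \<phi> \<Longrightarrow> f \<in> hardy2"
  by (simp add: model_space_def)
lemma model_orth: "f \<in> model_space \<phi> \<Longrightarrow> g \<in> hardy2 \<Longrightarrow> h2_inner f (\<lambda>z. \<phi> z * g z) = 0"
  by (simp add: model_space_def)

lemma bp_hardy2: "cmod a < 1 \<Longrightarrow> G \<in> hardy2 \<Longrightarrow> (\<lambda>z. blaschke_pow a n z * G z) \<in> hardy2"
  unfolding blaschke_pow_eq by (rule blp_hardy2)

lemma complete:
  assumes a: "cmod a < 1"
  shows "f \<in> model_space (blaschke_pow a n) \<Longrightarrow> z \<in> ball 0 1 \<Longrightarrow>
         f z = (\<Sum>k=1..n. h2_inner f (ebasis a k) * ebasis a k z)"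
proof (induction n arbitrary: f z)
  case 0
  have fH: "f \<in> hardy2" by (rule model_H[OF 0(1)])
  have "(\<lambda>z. blaschke_pow a 0 z * f z) = f" by (simp add: blaschke_pow_def)
  hence "h2_inner f f = 0" using model_orth[OF 0(1) fH] by simp
  thus ?case using inner_self_zero[OF fH _ 0(2)] by simp
next
  case (Suc n)
  have fH: "f \<in> hardy2" by (rule model_H[OF Suc(2)])
  define e1 where "e1 = ebasis a 1"
  have e1H: "e1 \<in> hardy2" unfolding e1_def by (rule e1_H[OF a])
  define c1 where "c1 = h2_inner f e1"
  define h where "h = (\<lambda>z. f z - c1 * e1 z)"
  have hH: "h \<in> hardy2" unfolding h_def by (intro hardy2_diff hardy2_cmult fH e1H)
  have c1eq: "c1 = of_real (cc a) * f a" unfolding c1_def e1_def by (rule inner_e1[OF a fH])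
  have "h a = f a - f a * (of_real (cc a) * e1 a)" by (simp add: h_def c1eq mult_ac)
  hence ha: "h a = 0" using cc_e1[OF a] by (simp add: e1_def)
  obtain g where gH: "g \<in> hardy2" and hg: "\<And>z. z \<in> ball 0 1 \<Longrightarrow> h z = bl a z * g z"
    using division[OF a hH ha] by metis
  have e1m: "e1 \<in> model_space (blaschke_pow a (Suc n))" unfolding e1_def by (rule e_model[OF a]) auto
  have gm: "g \<in> model_space (blaschke_pow a n)"
    unfolding model_space_def
  proof (intro CollectI conjI ballI gH)
    fix G assume G: "G \<in> hardy2"
    have PG: "(\<lambda>z. blaschke_pow a n z * G z) \<in> hardy2" by (rule bp_hardy2[OF a G])
    have PG': "(\<lambda>z. blaschke_pow a (Suc n) z * G z) \<in> hardy2" by (rule bp_hardy2[OF a G])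
    have "h2_inner g (\<lambda>z. blaschke_pow a n z * G z)
        = h2_inner (\<lambda>z. bl a z * g z) (\<lambda>z. bl a z * (blaschke_pow a n z * G z))"
      by (rule bl_iso[OF a gH PG, symmetric])
    also have "\<dots> = h2_inner h (\<lambda>z. blaschke_pow a (Suc n) z * G z)"
      by (rule inner_cong) (auto simp: hg blaschke_pow_eq)
    also have "\<dots> = h2_inner f (\<lambda>z. blaschke_pow a (Suc n) z * G z)
                   - c1 * h2_inner e1 (\<lambda>z. blaschke_pow a (Suc n) z * G z)"
      unfolding h_def
      by (simp add: inner_diff_left[OF fH hardy2_cmult[OF e1H] PG'] inner_cmult_left[OF e1H PG'])
    also have "\<dots> = 0" using model_orth[OF Suc(2) G] model_orth[OF e1m G] by simp
    finally show "h2_inner g (\<lambda>z. blaschke_pow a n z * G z) = 0" .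
  qed
  have IH: "\<And>z. z \<in> ball 0 1 \<Longrightarrow> g z = (\<Sum>k=1..n. h2_inner g (ebasis a k) * ebasis a k z)"
    by (rule Suc.IH[OF gm])
  have coef: "h2_inner f (ebasis a (Suc k)) = h2_inner g (ebasis a k)" if k: "k \<in> {1..n}" for k
  proof -
    have ekH: "ebasis a k \<in> hardy2" using k by (intro ek_H a) auto
    have eSH: "ebasis a (Suc k) \<in> hardy2" by (intro ek_H a) auto
    have "f = (\<lambda>z. h z + c1 * e1 z)" by (simp add: h_def)
    hence "h2_inner f (ebasis a (Suc k)) = h2_inner h (ebasis a (Suc k)) + c1 * h2_inner e1 (ebasis a (Suc k))"
      by (simp add: inner_add_left[OF hH hardy2_cmult[OF e1H] eSH] inner_cmult_left[OF e1H eSH])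
    also have "h2_inner e1 (ebasis a (Suc k)) = 0" unfolding e1_def using k ortho[OF a, of 1 "Suc k"] by auto
    also have "h2_inner h (ebasis a (Suc k)) = h2_inner (\<lambda>z. bl a z * g z) (\<lambda>z. bl a z * ebasis a k z)"
      by (rule inner_cong) (use k in \<open>auto simp: hg eSuc'\<close>)
    also have "\<dots> = h2_inner g (ebasis a k)" by (rule bl_iso[OF a gH ekH])
    finally show ?thesis by simp
  qed
  have "f z = h z + c1 * e1 z" by (simp add: h_def)
  also have "h z = bl a z * g z" by (rule hg[OF Suc(3)])
  also have "g z = (\<Sum>k=1..n. h2_inner g (ebasis a k) * ebasis a k z)" by (rule IH[OF Suc(3)])
  also have "bl a z * \<dots> = (\<Sum>k=1..n. h2_inner f (ebasis a (Suc k)) * ebasis a (Suc k) z)"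
    unfolding sum_distrib_left
    by (intro sum.cong refl) (auto simp: coef eSuc')
  also have "\<dots> + c1 * e1 z = (\<Sum>k=1..Suc n. h2_inner f (ebasis a k) * ebasis a k z)"
    unfolding sum_shift1 by (simp add: c1_def e1_def)
  finally show ?case .
qed


definition Cf :: "complex \<Rightarrow> nat \<Rightarrow> complex \<Rightarrow> complex" where
  "Cf a j z = cnj a * ebasis a j z + (1 - a * cnj a) * (\<Sum>i\<in>{1..<j}. (-a) ^ (j - 1 - i) * ebasis a i z)"

lemma bl_zero: "bl a 0 = - a" by (simp add: bl_def)

lemma sum_split_C:
  "(\<Sum>i\<in>{1..<Suc (Suc p)}. (-a) ^ (Suc (Suc p) - 1 - i) * ebasis a i z)
   = ebasis a (Suc p) z + (-a) * (\<Sum>i\<in>{1..<Suc p}. (-a) ^ (Suc p - 1 - i) * ebasis a i z)"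
proof -
  have "{1..<Suc (Suc p)} = insert (Suc p) {1..<Suc p}" by auto
  hence "(\<Sum>i\<in>{1..<Suc (Suc p)}. (-a) ^ (Suc (Suc p) - 1 - i) * ebasis a i z)
        = (-a) ^ (Suc p - Suc p) * ebasis a (Suc p) z + (\<Sum>i\<in>{1..<Suc p}. (-a) ^ (Suc p - i) * ebasis a i z)"
    by simp
  also have "(\<Sum>i\<in>{1..<Suc p}. (-a) ^ (Suc p - i) * ebasis a i z)
           = (\<Sum>i\<in>{1..<Suc p}. (-a) * ((-a) ^ (p - i) * ebasis a i z))"
    by (intro sum.cong refl) (auto simp: Suc_diff_le)
  also have "\<dots> = (-a) * (\<Sum>i\<in>{1..<Suc p}. (-a) ^ (p - i) * ebasis a i z)"
    by (simp only: sum_distrib_left)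
  finally show ?thesis by simp
qed

lemma ident:
  assumes nz: "1 - cnj a * z \<noteq> 0"
  shows "ebasis a (Suc p) z = ebasis a (Suc p) 0 + z * Cf a (Suc p) z"
proof (induction p)
  case 0
  have "ebasis a 1 z = of_real (cc a) / (1 - cnj a * z)" by (simp add: ebasis_def cc_def)
  moreover have "ebasis a 1 0 = of_real (cc a)" by (simp add: ebasis_def cc_def)
  ultimately show ?case using nz by (simp add: Cf_def field_simps)
next
  case (Suc p)
  define E where "E = ebasis a (Suc p) z"
  define E0 where "E0 = ebasis a (Suc p) 0"
  define T where "T = (\<Sum>i\<in>{1..<Suc p}. (-a) ^ (Suc p - 1 - i) * ebasis a i z)"
  define b where "b = bl a z"
  have IH: "E = E0 + z * (cnj a * E + (1 - a * cnj a) * T)"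
    using Suc by (simp add: E_def E0_def T_def Cf_def)
  have K: "z * cnj a * b + z - a = b"
    using nz unfolding b_def bl_def by (simp add: field_simps)
  have e2: "ebasis a (Suc (Suc p)) z = b * E" unfolding b_def E_def by (rule eSuc') simp
  have e20: "ebasis a (Suc (Suc p)) 0 = - a * E0" unfolding E0_def using eSuc'[of "Suc p" a 0] by (simp add: bl_zero)
  have C2: "Cf a (Suc (Suc p)) z = cnj a * (b * E) + (1 - a * cnj a) * (E + (-a) * T)"
    unfolding Cf_def sum_split_C e2 T_def E_def by simp
  have R: "- a * E0 + z * (cnj a * (b * E) + (1 - a * cnj a) * (E + - a * T)) - b * E
     = (-a) * (E0 + z * (cnj a * E + (1 - a * cnj a) * T) - E) + E * (z * cnj a * b + z - a - b)"
    by (simp add: algebra_simps)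
  have "(E0 + z * (cnj a * E + (1 - a * cnj a) * T) - E) = 0" using IH by simp
  moreover have "z * cnj a * b + z - a - b = 0" using K by simp
  ultimately have "- a * E0 + z * (cnj a * (b * E) + (1 - a * cnj a) * (E + - a * T)) - b * E = 0"
    unfolding R by simp
  thus ?case unfolding e2 e20 C2 by simp
qed

lemma Cf_H:
  assumes a: "cmod a < 1" and j: "j \<ge> 1"
  shows "Cf a j \<in> hardy2"
proof -
  have S: "(\<lambda>z. \<Sum>i\<in>{1..<j}. (-a) ^ (j - 1 - i) * ebasis a i z) \<in> hardy2"
    by (rule hardy2_sum) (auto intro!: ek_H a)
  have "(\<lambda>z. cnj a * ebasis a j z + (1 - a * cnj a) * (\<Sum>i\<in>{1..<j}. (-a) ^ (j - 1 - i) * ebasis a i z)) \<in> hardy2"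
    by (intro hardy2_add hardy2_cmult ek_H a j S)
  thus ?thesis by (simp add: Cf_def[abs_def])
qed

lemma tc_bshift_e:
  assumes a: "cmod a < 1" and j: "j \<ge> 1"
  shows "tc (bshift (ebasis a j)) = tc (Cf a j)"
proof
  fix m
  obtain p where p: "j = Suc p" using j by (cases j) auto
  have ejh: "ebasis a j holomorphic_on ball 0 1" by (intro hardy2_holo ek_H a j)
  have "tc (bshift (ebasis a j)) m = tc (ebasis a j) (Suc m)" by (rule tc_bshift[OF ejh])
  also have "\<dots> = tc (Cf a j) m"
  proof (rule tc_affine_shift)
    show "Cf a j holomorphic_on ball 0 1" by (intro hardy2_holo Cf_H a j)
    fix z :: complex assume "z \<in> ball 0 1"
    hence "1 - cnj a * z \<noteq> 0" by (rule den_nz[OF a])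
    thus "ebasis a j z = ebasis a j 0 + z * Cf a j z" unfolding p by (rule ident)
  qed
  finally show "tc (bshift (ebasis a j)) m = tc (Cf a j) m" .
qed

lemma bshift_inner:
  assumes a: "cmod a < 1" and i: "i \<ge> 1" and j: "j \<ge> 1"
  shows "h2_inner (bshift (ebasis a j)) (ebasis a i)
       = (if i = j then cnj a else 0) + (1 - a * cnj a) * (if i < j then (-a) ^ (j - 1 - i) else 0)"
proof -
  have eiH: "ebasis a i \<in> hardy2" by (intro ek_H a i)
  have ejH: "ebasis a j \<in> hardy2" by (intro ek_H a j)
  define Sf where "Sf = (\<lambda>z. \<Sum>l\<in>{1..<j}. (-a) ^ (j - 1 - l) * ebasis a l z)"
  have S: "Sf \<in> hardy2" unfolding Sf_def
    by (rule hardy2_sum) (auto intro!: ek_H a)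
  have "h2_inner (bshift (ebasis a j)) (ebasis a i) = h2_inner (Cf a j) (ebasis a i)"
    unfolding h2_inner_def tc_bshift_e[OF a j] ..
  also have "Cf a j = (\<lambda>z. cnj a * ebasis a j z + (1 - a * cnj a) * Sf z)"
    by (simp add: Cf_def[abs_def] Sf_def)
  also have "h2_inner \<dots> (ebasis a i) = h2_inner (\<lambda>z. cnj a * ebasis a j z) (ebasis a i)
                 + h2_inner (\<lambda>z. (1 - a * cnj a) * Sf z) (ebasis a i)"
    by (rule inner_add_left[OF hardy2_cmult[OF ejH] hardy2_cmult[OF S] eiH])
  also have "h2_inner (\<lambda>z. cnj a * ebasis a j z) (ebasis a i) = cnj a * h2_inner (ebasis a j) (ebasis a i)"
    by (rule inner_cmult_left[OF ejH eiH])
  also have "h2_inner (\<lambda>z. (1 - a * cnj a) * Sf z) (ebasis a i) = (1 - a * cnj a) * h2_inner Sf (ebasis a i)"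
    by (rule inner_cmult_left[OF S eiH])
  also have "h2_inner Sf (ebasis a i) = (\<Sum>l\<in>{1..<j}. (-a) ^ (j - 1 - l) * h2_inner (ebasis a l) (ebasis a i))"
    unfolding Sf_def by (rule inner_sum_left[OF _ _ eiH]) (auto intro!: ek_H a)
  also have "(\<Sum>l\<in>{1..<j}. (-a) ^ (j - 1 - l) * h2_inner (ebasis a l) (ebasis a i))
           = (\<Sum>l\<in>{1..<j}. if l = i then (-a) ^ (j - 1 - l) else 0)"
    by (intro sum.cong refl) (auto simp: ortho[OF a _ i])
  also have "\<dots> = (if i < j then (-a) ^ (j - 1 - i) else 0)"
    using i by (simp add: sum.delta')
  finally show ?thesis using ortho[OF a j i] by auto
qed


definition Amat :: "nat \<Rightarrow> complex \<Rightarrow> complex mat" where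
  "Amat n a = 1\<^sub>m n + a \<cdot>\<^sub>m transpose_mat (shift_mat n)"
definition Nmat :: "nat \<Rightarrow> complex \<Rightarrow> complex mat" where
  "Nmat n a = mat n n (\<lambda>(i, j). if i \<le> j then (-a) ^ (j - i) else 0)"
definition Pmat :: "nat \<Rightarrow> complex \<Rightarrow> complex mat" where
  "Pmat n a = transpose_mat (shift_mat n) + cnj a \<cdot>\<^sub>m 1\<^sub>m n"

lemma shift_carrier: "shift_mat n \<in> carrier_mat n n" by (simp add: shift_mat_def)
lemma Amat_carrier: "Amat n a \<in> carrier_mat n n" by (simp add: Amat_def shift_carrier)
lemma Nmat_carrier: "Nmat n a \<in> carrier_mat n n" by (simp add: Nmat_def)
lemma Pmat_carrier: "Pmat n a \<in> carrier_mat n n" by (simp add: Pmat_def shift_carrier)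

lemma tshift_idx: "i < n \<Longrightarrow> k < n \<Longrightarrow> transpose_mat (shift_mat n) $$ (i, k) = (if k = Suc i then 1 else 0)"
  by (simp add: shift_mat_def)

lemma Amat_idx: "i < n \<Longrightarrow> k < n \<Longrightarrow> Amat n a $$ (i, k) = (if k = i then 1 else 0) + (if k = Suc i then a else 0)"
proof -
  assume ik: "i < n" "k < n"
  have T: "transpose_mat (shift_mat n) $$ (i, k) = (if k = Suc i then 1 else 0)" by (rule tshift_idx[OF ik])
  show ?thesis using ik shift_carrier[of n] by (simp add: Amat_def T del: index_transpose_mat(1))
qed

lemma Pmat_idx: "i < n \<Longrightarrow> k < n \<Longrightarrow> Pmat n a $$ (i, k) = (if k = Suc i then 1 else 0) + (if k = i then cnj a else 0)"
proof -
  assume ik: "i < n" "k < n"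
  have T: "transpose_mat (shift_mat n) $$ (i, k) = (if k = Suc i then 1 else 0)" by (rule tshift_idx[OF ik])
  show ?thesis using ik shift_carrier[of n] by (simp add: Pmat_def T del: index_transpose_mat(1))
qed

lemma Nmat_idx: "i < n \<Longrightarrow> j < n \<Longrightarrow> Nmat n a $$ (i, j) = (if i \<le> j then (-a) ^ (j - i) else 0)"
  by (simp add: Nmat_def)

lemma mult_idx:
  assumes "P \<in> carrier_mat n n" "Q \<in> carrier_mat n n" "i < n" "j < n"
  shows "(P * Q) $$ (i, j) = (\<Sum>k<n. P $$ (i, k) * Q $$ (k, j))"
  using assms by (simp add: scalar_prod_def atLeast0LessThan)

lemma sum_two:
  fixes X :: "nat \<Rightarrow> complex"
  assumes "i < n"
  shows "(\<Sum>k<n. ((if k = i then x else 0) + (if k = Suc i then y else 0)) * X k)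
       = x * X i + (if Suc i < n then y * X (Suc i) else 0)"
proof -
  have "(\<Sum>k<n. ((if k = i then x else 0) + (if k = Suc i then y else 0)) * X k)
      = (\<Sum>k<n. (if k = i then x * X k else 0)) + (\<Sum>k<n. (if k = Suc i then y * X k else 0))"
    by (subst sum.distrib[symmetric]) (intro sum.cong refl, auto)
  also have "\<dots> = x * X i + (if Suc i < n then y * X (Suc i) else 0)"
    using assms by (simp add: sum.delta')
  finally show ?thesis .
qed

lemma sum_two':
  fixes X :: "nat \<Rightarrow> complex"
  assumes "j < n"
  shows "(\<Sum>k<n. X k * ((if k = j then x else 0) + (if j = Suc k then y else 0)))
       = X j * x + (if j \<ge> 1 then X (j - 1) * y else 0)"
proof -
  have "(\<Sum>k<n. X k * ((if k = j then x else 0) + (if j = Suc k then y else 0)))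
      = (\<Sum>k<n. (if k = j then X k * x else 0)) + (\<Sum>k<n. (if k = j - 1 \<and> j \<ge> 1 then X k * y else 0))"
    by (subst sum.distrib[symmetric]) (intro sum.cong refl, auto)
  also have "(\<Sum>k<n. (if k = j - 1 \<and> j \<ge> 1 then X k * y else 0)) = (if j \<ge> 1 then X (j - 1) * y else 0)"
    using assms by (cases "j \<ge> 1") (auto simp: sum.delta')
  finally show ?thesis using assms by (simp add: sum.delta')
qed

lemma AN: "Amat n a * Nmat n a = 1\<^sub>m n"
proof (rule eq_matI)
  fix i j assume i: "i < dim_row (1\<^sub>m n :: complex mat)" and j: "j < dim_col (1\<^sub>m n :: complex mat)"
  hence i: "i < n" and j: "j < n" by auto
  have "(Amat n a * Nmat n a) $$ (i, j) = (\<Sum>k<n. Amat n a $$ (i, k) * Nmat n a $$ (k, j))"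
    by (rule mult_idx[OF Amat_carrier Nmat_carrier i j])
  also have "\<dots> = (\<Sum>k<n. ((if k = i then 1 else 0) + (if k = Suc i then a else 0)) * Nmat n a $$ (k, j))"
    by (intro sum.cong refl) (simp add: Amat_idx i)
  also have "\<dots> = 1 * Nmat n a $$ (i, j) + (if Suc i < n then a * Nmat n a $$ (Suc i, j) else 0)"
    by (rule sum_two[OF i])
  also have "\<dots> = (if i = j then 1 else 0)"
  proof -
    consider "i = j" | "i < j" | "j < i" by linarith
    thus ?thesis
    proof cases
      case 2
      hence "j - i = Suc (j - Suc i)" by simp
      thus ?thesis using 2 i j by (simp add: Nmat_idx)
    qed (use i j in \<open>auto simp: Nmat_idx\<close>)
  qed
  also have "\<dots> = 1\<^sub>m n $$ (i, j)" using i j by simp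
  finally show "(Amat n a * Nmat n a) $$ (i, j) = 1\<^sub>m n $$ (i, j)" .
qed (auto simp: Amat_def Nmat_def shift_mat_def)

lemma NA: "Nmat n a * Amat n a = 1\<^sub>m n"
proof (rule eq_matI)
  fix i j assume i: "i < dim_row (1\<^sub>m n :: complex mat)" and j: "j < dim_col (1\<^sub>m n :: complex mat)"
  hence i: "i < n" and j: "j < n" by auto
  have "(Nmat n a * Amat n a) $$ (i, j) = (\<Sum>k<n. Nmat n a $$ (i, k) * Amat n a $$ (k, j))"
    by (rule mult_idx[OF Nmat_carrier Amat_carrier i j])
  also have "\<dots> = (\<Sum>k<n. Nmat n a $$ (i, k) * ((if k = j then 1 else 0) + (if j = Suc k then a else 0)))"
    by (intro sum.cong refl) (auto simp: Amat_idx j)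
  also have "\<dots> = Nmat n a $$ (i, j) * 1 + (if j \<ge> 1 then Nmat n a $$ (i, j - 1) * a else 0)"
    by (rule sum_two'[OF j])
  also have "\<dots> = (if i = j then 1 else 0)"
  proof -
    consider "i = j" | "i < j" | "j < i" by linarith
    thus ?thesis
    proof cases
      case 2
      hence "j - i = Suc (j - 1 - i)" by simp
      thus ?thesis using 2 i j by (simp add: Nmat_idx)
    qed (use i j in \<open>auto simp: Nmat_idx\<close>)
  qed
  also have "\<dots> = 1\<^sub>m n $$ (i, j)" using i j by simp
  finally show "(Nmat n a * Amat n a) $$ (i, j) = 1\<^sub>m n $$ (i, j)" .
qed (auto simp: Amat_def Nmat_def shift_mat_def)

lemma inv_Amat: "mat_inverse (Amat n a) = Some (Nmat n a)"
proof -
  have U: "Amat n a \<in> Units (ring_mat TYPE(complex) n ())"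
    using AN[of n a] NA[of n a] Amat_carrier[of n a] Nmat_carrier[of n a]
    by (auto simp: Units_def ring_mat_def)
  obtain M where M: "mat_inverse (Amat n a) = Some M"
    using mat_inverse(1)[OF Amat_carrier, of n a "()"] U by (cases "mat_inverse (Amat n a)") auto
  from mat_inverse(2)[OF Amat_carrier M]
  have AM: "Amat n a * M = 1\<^sub>m n" and Mc: "M \<in> carrier_mat n n" by auto
  have "Nmat n a = Nmat n a * (Amat n a * M)" using AM Nmat_carrier[of n a] by simp
  also have "\<dots> = (Nmat n a * Amat n a) * M"
    by (rule assoc_mult_mat[symmetric, OF Nmat_carrier Amat_carrier Mc])
  also have "\<dots> = M" using NA Mc by simp
  finally show ?thesis using M by simp
qed

lemma mat_part:
  assumes a: "cmod a < 1"
  shows "mat n n (\<lambda>(i, j). h2_inner (bshift (ebasis a (j + 1))) (ebasis a (i + 1))) = Pmat n a * Nmat n a"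
proof (rule eq_matI)
  fix i j assume "i < dim_row (Pmat n a * Nmat n a)" "j < dim_col (Pmat n a * Nmat n a)"
  hence i: "i < n" and j: "j < n" using Pmat_carrier[of n a] Nmat_carrier[of n a] by auto
  have L: "mat n n (\<lambda>(i, j). h2_inner (bshift (ebasis a (j + 1))) (ebasis a (i + 1))) $$ (i, j)
      = (if i = j then cnj a else 0) + (1 - a * cnj a) * (if i < j then (-a) ^ (j - Suc i) else 0)"
    using i j bshift_inner[OF a, of "i + 1" "j + 1"] by simp
  have "(Pmat n a * Nmat n a) $$ (i, j) = (\<Sum>k<n. Pmat n a $$ (i, k) * Nmat n a $$ (k, j))"
    by (rule mult_idx[OF Pmat_carrier Nmat_carrier i j])
  also have "\<dots> = (\<Sum>k<n. ((if k = i then cnj a else 0) + (if k = Suc i then 1 else 0)) * Nmat n a $$ (k, j))"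
    by (intro sum.cong refl) (simp add: Pmat_idx i add.commute)
  also have "\<dots> = cnj a * Nmat n a $$ (i, j) + (if Suc i < n then 1 * Nmat n a $$ (Suc i, j) else 0)"
    by (rule sum_two[OF i])
  also have "\<dots> = (if i = j then cnj a else 0) + (1 - a * cnj a) * (if i < j then (-a) ^ (j - Suc i) else 0)"
  proof -
    consider "i = j" | "i < j" | "j < i" by linarith
    thus ?thesis
    proof cases
      case 2
      hence "j - i = Suc (j - Suc i)" by simp
      thus ?thesis using 2 i j by (simp add: Nmat_idx algebra_simps)
    qed (use i j in \<open>auto simp: Nmat_idx\<close>)
  qed
  finally show "mat n n (\<lambda>(i, j). h2_inner (bshift (ebasis a (j + 1))) (ebasis a (i + 1))) $$ (i, j) =
         (Pmat n a * Nmat n a) $$ (i, j)" using L by simp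
qed (use Pmat_carrier[of n a] Nmat_carrier[of n a] in auto)


lemma unit_cnj: "cmod w = 1 \<Longrightarrow> w * cnj w = 1"
  using complex_norm_square[of w] by simp

lemma rot_ps:
  assumes w: "cmod w = 1" and f: "f holomorphic_on ball 0 1" and z: "z \<in> ball 0 1"
  shows "(\<lambda>n. (tc f n * w ^ n) * z ^ n) sums f (w * z)"
proof -
  have "w * z \<in> ball 0 1" using w z by (simp add: norm_mult)
  from holo_ps[OF f this] show ?thesis by (simp add: power_mult_distrib mult_ac)
qed

lemma tc_rot: "cmod w = 1 \<Longrightarrow> f holomorphic_on ball 0 1 \<Longrightarrow> tc (\<lambda>z. f (w * z)) n = tc f n * w ^ n"
  by (rule ps_tc) (rule rot_ps)

lemma rot_holo: "cmod w = 1 \<Longrightarrow> f holomorphic_on ball 0 1 \<Longrightarrow> (\<lambda>z. f (w * z)) holomorphic_on ball 0 1"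
  by (rule ps_holo) (rule rot_ps)

lemma tc_rot_fun: "cmod w = 1 \<Longrightarrow> f \<in> hardy2 \<Longrightarrow> tc (\<lambda>z. f (w * z)) = (\<lambda>n. tc f n * w ^ n)"
  by (rule ext, rule tc_rot) (auto simp: hardy2_holo)

lemma rot_H: "cmod w = 1 \<Longrightarrow> f \<in> hardy2 \<Longrightarrow> (\<lambda>z. f (w * z)) \<in> hardy2"
  using hardy2_l2[of f] by (auto simp: hardy2_iff tc_rot_fun rot_holo l2_def norm_mult norm_power)

lemma inner_rot:
  assumes w: "cmod w = 1" and f: "f \<in> hardy2" and g: "g \<in> hardy2"
  shows "h2_inner (\<lambda>z. f (w * z)) (\<lambda>z. g (w * z)) = h2_inner f g"
proof -
  have eqn: "tc f n * w ^ n * cnj (tc g n * w ^ n) = tc f n * cnj (tc g n)" for n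
  proof -
    have "tc f n * w ^ n * cnj (tc g n * w ^ n) = tc f n * cnj (tc g n) * (w * cnj w) ^ n"
      by (simp add: power_mult_distrib mult_ac)
    thus ?thesis using unit_cnj[OF w] by simp
  qed
  have "h2_inner (\<lambda>z. f (w * z)) (\<lambda>z. g (w * z)) = (\<Sum>n. tc f n * w ^ n * cnj (tc g n * w ^ n))"
    unfolding h2_inner_def tc_rot_fun[OF w f] tc_rot_fun[OF w g] ..
  also have "\<dots> = h2_inner f g" unfolding h2_inner_def eqn ..
  finally show ?thesis .
qed

lemma norm_rot: "cmod w = 1 \<Longrightarrow> f \<in> hardy2 \<Longrightarrow> h2_norm (\<lambda>z. f (w * z)) = h2_norm f"
  by (simp add: h2_norm_def tc_rot_fun norm_mult norm_power)

lemma bshift_rot: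
  assumes w: "cmod w = 1" and f: "f \<in> hardy2"
  shows "h2_inner (bshift (\<lambda>z. f (w * z))) (\<lambda>z. f (w * z)) = w * h2_inner (bshift f) f"
proof -
  have rH: "(\<lambda>z. f (w * z)) \<in> hardy2" by (rule rot_H[OF w f])
  have fh: "f holomorphic_on ball 0 1" by (rule hardy2_holo[OF f])
  have "tc (bshift (\<lambda>z. f (w * z))) m = tc f (Suc m) * w ^ Suc m" for m
    using tc_bshift[OF hardy2_holo[OF rH]] tc_rot_fun[OF w f] by simp
  hence "h2_inner (bshift (\<lambda>z. f (w * z))) (\<lambda>z. f (w * z))
       = (\<Sum>m. w * (tc f (Suc m) * cnj (tc f m)) * (w * cnj w) ^ m)"
    unfolding h2_inner_def using tc_rot_fun[OF w f] by (simp add: power_mult_distrib mult_ac)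
  also have "\<dots> = (\<Sum>m. w * (tc (bshift f) m * cnj (tc f m)))"
    using unit_cnj[OF w] tc_bshift[OF fh] by simp
  also have "\<dots> = w * h2_inner (bshift f) f"
    unfolding h2_inner_def by (rule suminf_mult) (intro inner_summable hardy2_bshift f)
  finally show ?thesis .
qed

lemma model_rot:
  assumes w: "cmod w = 1" and rel: "\<And>z. \<psi>1 z = c * \<psi>2 (w * z)"
    and clos: "\<And>g. g \<in> hardy2 \<Longrightarrow> (\<lambda>z. \<psi>2 z * g z) \<in> hardy2"
    and h: "h \<in> model_space \<psi>2"
  shows "(\<lambda>z. h (w * z)) \<in> model_space \<psi>1"
  unfolding model_space_def
proof (intro CollectI conjI ballI)
  have hH: "h \<in> hardy2" using h by (simp add: model_space_def)
  show "(\<lambda>z. h (w * z)) \<in> hardy2" by (rule rot_H[OF w hH])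
  fix G assume G: "G \<in> hardy2"
  have w': "cmod (cnj w) = 1" using w by simp
  define G' where "G' = (\<lambda>z. c * G (cnj w * z))"
  have G'H: "G' \<in> hardy2" unfolding G'_def by (intro hardy2_cmult rot_H[OF w' G])
  have eq: "(\<lambda>z. \<psi>1 z * G z) = (\<lambda>z. (\<lambda>u. \<psi>2 u * G' u) (w * z))"
  proof
    fix z
    have E: "cnj w * (w * z) = z" using unit_cnj[OF w] by (simp add: mult.assoc[symmetric] mult.commute[of "cnj w"])
    have X: "(\<lambda>u. \<psi>2 u * G' u) (w * z) = \<psi>2 (w * z) * (c * G z)" unfolding G'_def by (simp only: E)
    have "\<psi>1 z * G z = \<psi>2 (w * z) * (c * G z)" by (simp add: rel mult_ac)
    also have "\<dots> = (\<lambda>u. \<psi>2 u * G' u) (w * z)" by (rule X[symmetric])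
    finally show "\<psi>1 z * G z = (\<lambda>u. \<psi>2 u * G' u) (w * z)" .
  qed
  have "h2_inner (\<lambda>z. h (w * z)) (\<lambda>z. \<psi>1 z * G z) = h2_inner h (\<lambda>u. \<psi>2 u * G' u)"
    unfolding eq by (rule inner_rot[OF w hH clos[OF G'H]])
  also have "\<dots> = 0" using h G'H by (simp add: model_space_def)
  finally show "h2_inner (\<lambda>z. h (w * z)) (\<lambda>z. \<psi>1 z * G z) = 0" .
qed

lemma range_rot:
  assumes w: "cmod w = 1" and rel1: "\<And>z. \<psi>1 z = c * \<psi>2 (w * z)"
    and rel2: "\<And>z. \<psi>2 z = cnj c * \<psi>1 (cnj w * z)"
    and clos1: "\<And>g. g \<in> hardy2 \<Longrightarrow> (\<lambda>z. \<psi>1 z * g z) \<in> hardy2"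
    and clos2: "\<And>g. g \<in> hardy2 \<Longrightarrow> (\<lambda>z. \<psi>2 z * g z) \<in> hardy2"
  shows "num_range_Sstar \<psi>1 = (\<lambda>x. w * x) ` num_range_Sstar \<psi>2"
proof (intro equalityI subsetI)
  have w': "cmod (cnj w) = 1" using w by simp
  fix x assume "x \<in> num_range_Sstar \<psi>1"
  then obtain f where f: "f \<in> model_space \<psi>1" "h2_norm f = 1" and x: "x = h2_inner (bshift f) f"
    unfolding num_range_Sstar_def by blast
  have fH: "f \<in> hardy2" using f by (simp add: model_space_def)
  define h where "h = (\<lambda>z. f (cnj w * z))"
  have hm: "h \<in> model_space \<psi>2" unfolding h_def by (rule model_rot[OF w' rel2 clos1 f(1)])
  have hH: "h \<in> hardy2" unfolding h_def by (rule rot_H[OF w' fH])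
  have fh: "f = (\<lambda>z. h (w * z))"
  proof
    fix z
    have E: "cnj w * (w * z) = z" using unit_cnj[OF w] by (simp add: mult.assoc[symmetric] mult.commute[of "cnj w"])
    show "f z = h (w * z)" unfolding h_def by (simp only: E)
  qed
  have "h2_norm h = 1" using f(2) norm_rot[OF w hH] fh by simp
  moreover have "x = w * h2_inner (bshift h) h" unfolding x fh by (rule bshift_rot[OF w hH])
  ultimately show "x \<in> (\<lambda>x. w * x) ` num_range_Sstar \<psi>2"
    using hm unfolding num_range_Sstar_def by blast
next
  fix x assume "x \<in> (\<lambda>x. w * x) ` num_range_Sstar \<psi>2"
  then obtain h where h: "h \<in> model_space \<psi>2" "h2_norm h = 1" and x: "x = w * h2_inner (bshift h) h"
    unfolding num_range_Sstar_def by blast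
  have hH: "h \<in> hardy2" using h by (simp add: model_space_def)
  have "(\<lambda>z. h (w * z)) \<in> model_space \<psi>1" by (rule model_rot[OF w rel1 clos2 h(1)])
  moreover have "h2_norm (\<lambda>z. h (w * z)) = 1" using h(2) norm_rot[OF w hH] by simp
  moreover have "x = h2_inner (bshift (\<lambda>z. h (w * z))) (\<lambda>z. h (w * z))"
    unfolding x by (rule bshift_rot[OF w hH, symmetric])
  ultimately show "x \<in> num_range_Sstar \<psi>1" unfolding num_range_Sstar_def by blast
qed


lemma conj_ps:
  assumes f: "f holomorphic_on ball 0 1" and z: "z \<in> ball 0 1"
  shows "(\<lambda>n. cnj (tc f n) * z ^ n) sums cnj (f (cnj z))"
proof -
  have "cnj z \<in> ball 0 1" using z by simp
  from holo_ps[OF f this] have "(\<lambda>n. cnj (tc f n * cnj z ^ n)) sums cnj (f (cnj z))"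
    by (rule sums_cnj')
  thus ?thesis by simp
qed

lemma tc_conj: "f holomorphic_on ball 0 1 \<Longrightarrow> tc (\<lambda>z. cnj (f (cnj z))) n = cnj (tc f n)"
  by (rule ps_tc) (rule conj_ps)

lemma conj_holo: "f holomorphic_on ball 0 1 \<Longrightarrow> (\<lambda>z. cnj (f (cnj z))) holomorphic_on ball 0 1"
  by (rule ps_holo) (rule conj_ps)

lemma tc_conj_fun: "f \<in> hardy2 \<Longrightarrow> tc (\<lambda>z. cnj (f (cnj z))) = (\<lambda>n. cnj (tc f n))"
  by (rule ext, rule tc_conj) (auto simp: hardy2_holo)

lemma conj_H: "f \<in> hardy2 \<Longrightarrow> (\<lambda>z. cnj (f (cnj z))) \<in> hardy2"
  using hardy2_l2[of f] by (auto simp: hardy2_iff tc_conj_fun conj_holo l2_def)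

lemma inner_conj:
  assumes f: "f \<in> hardy2" and g: "g \<in> hardy2"
  shows "h2_inner (\<lambda>z. cnj (f (cnj z))) (\<lambda>z. cnj (g (cnj z))) = cnj (h2_inner f g)"
  unfolding h2_inner_def tc_conj_fun[OF f] tc_conj_fun[OF g]
  using suminf_cnj[OF inner_summable[OF f g]] by simp

lemma norm_conj: "f \<in> hardy2 \<Longrightarrow> h2_norm (\<lambda>z. cnj (f (cnj z))) = h2_norm f"
  by (simp add: h2_norm_def tc_conj_fun)

lemma bshift_conj:
  assumes f: "f \<in> hardy2"
  shows "h2_inner (bshift (\<lambda>z. cnj (f (cnj z)))) (\<lambda>z. cnj (f (cnj z))) = cnj (h2_inner (bshift f) f)"
proof -
  have cH: "(\<lambda>z. cnj (f (cnj z))) \<in> hardy2" by (rule conj_H[OF f])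
  have fh: "f holomorphic_on ball 0 1" by (rule hardy2_holo[OF f])
  have "tc (bshift (\<lambda>z. cnj (f (cnj z)))) = (\<lambda>m. cnj (tc (bshift f) m))"
    using tc_bshift[OF hardy2_holo[OF cH]] tc_conj_fun[OF f] tc_bshift[OF fh] by auto
  thus ?thesis unfolding h2_inner_def tc_conj_fun[OF f]
    using suminf_cnj[OF inner_summable[OF hardy2_bshift[OF f] f]] by simp
qed

lemma model_conj:
  assumes sym: "\<And>z. \<psi> z = cnj (\<psi> (cnj z))"
    and clos: "\<And>g. g \<in> hardy2 \<Longrightarrow> (\<lambda>z. \<psi> z * g z) \<in> hardy2"
    and h: "h \<in> model_space \<psi>"
  shows "(\<lambda>z. cnj (h (cnj z))) \<in> model_space \<psi>"
  unfolding model_space_def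
proof (intro CollectI conjI ballI)
  have hH: "h \<in> hardy2" using h by (simp add: model_space_def)
  show "(\<lambda>z. cnj (h (cnj z))) \<in> hardy2" by (rule conj_H[OF hH])
  fix G assume G: "G \<in> hardy2"
  define G' where "G' = (\<lambda>z. cnj (G (cnj z)))"
  have G'H: "G' \<in> hardy2" unfolding G'_def by (rule conj_H[OF G])
  have eq: "(\<lambda>z. \<psi> z * G z) = (\<lambda>z. cnj ((\<lambda>u. \<psi> u * G' u) (cnj z)))"
    by (rule ext) (simp add: G'_def, subst sym, simp)
  have "h2_inner (\<lambda>z. cnj (h (cnj z))) (\<lambda>z. \<psi> z * G z) = cnj (h2_inner h (\<lambda>u. \<psi> u * G' u))"
    unfolding eq by (rule inner_conj[OF hH clos[OF G'H]])
  also have "\<dots> = 0" using h G'H by (simp add: model_space_def)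
  finally show "h2_inner (\<lambda>z. cnj (h (cnj z))) (\<lambda>z. \<psi> z * G z) = 0" .
qed

lemma range_conj:
  assumes sym: "\<And>z. \<psi> z = cnj (\<psi> (cnj z))"
    and clos: "\<And>g. g \<in> hardy2 \<Longrightarrow> (\<lambda>z. \<psi> z * g z) \<in> hardy2"
    and x: "x \<in> num_range_Sstar \<psi>"
  shows "cnj x \<in> num_range_Sstar \<psi>"
proof -
  obtain f where f: "f \<in> model_space \<psi>" "h2_norm f = 1" and x: "x = h2_inner (bshift f) f"
    using x unfolding num_range_Sstar_def by blast
  have fH: "f \<in> hardy2" using f by (simp add: model_space_def)
  have "(\<lambda>z. cnj (f (cnj z))) \<in> model_space \<psi>" by (rule model_conj[OF sym clos f(1)])
  moreover have "h2_norm (\<lambda>z. cnj (f (cnj z))) = 1" using f(2) norm_conj[OF fH] by simp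
  moreover have "cnj x = h2_inner (bshift (\<lambda>z. cnj (f (cnj z)))) (\<lambda>z. cnj (f (cnj z)))"
    unfolding x by (rule bshift_conj[OF fH, symmetric])
  ultimately show ?thesis unfolding num_range_Sstar_def by blast
qed

lemma bp_real: "blaschke_pow (complex_of_real r) n z = cnj (blaschke_pow (complex_of_real r) n (cnj z))"
  by (simp add: blaschke_pow_def)

lemma bp_rot:
  fixes \<alpha> :: complex
  defines "c \<equiv> cis (Arg \<alpha>)"
  shows "blaschke_pow \<alpha> n z = c ^ n * blaschke_pow (complex_of_real (cmod \<alpha>)) n (cnj c * z)"
proof -
  define r where "r = complex_of_real (cmod \<alpha>)"
  have al: "\<alpha> = r * c" unfolding r_def c_def using rcis_cmod_Arg[of \<alpha>] by (simp add: rcis_def)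
  have cc: "c * cnj c = 1" unfolding c_def by (simp add: cis_cnj cis_mult)
  have ral: "cnj r = r" unfolding r_def by simp
  have "(z - \<alpha>) / (1 - cnj \<alpha> * z) = c * ((cnj c * z - r) / (1 - cnj r * (cnj c * z)))"
  proof -
    have "z - \<alpha> = c * (cnj c * z - r)" unfolding al using cc by (simp add: algebra_simps)
    moreover have "1 - cnj \<alpha> * z = 1 - cnj r * (cnj c * z)" unfolding al by (simp add: mult_ac)
    ultimately show ?thesis by simp
  qed
  note E = this
  show ?thesis unfolding blaschke_pow_def r_def[symmetric] by (simp only: E power_mult_distrib)
qed

lemma bp_rot2:
  fixes \<alpha> :: complex
  defines "c \<equiv> cis (Arg \<alpha>)"
  shows "blaschke_pow (complex_of_real (cmod \<alpha>)) n z = cnj (c ^ n) * blaschke_pow \<alpha> n (cnj (cnj c) * z)"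
proof -
  have cc: "cnj c * c = 1" unfolding c_def by (simp add: cis_cnj cis_mult)
  have "blaschke_pow \<alpha> n (c * z) = c ^ n * blaschke_pow (complex_of_real (cmod \<alpha>)) n (cnj c * (c * z))"
    unfolding c_def by (rule bp_rot)
  also have "cnj c * (c * z) = z" using cc by (simp add: mult.assoc[symmetric])
  finally have "cnj (c ^ n) * blaschke_pow \<alpha> n (c * z) = (cnj c * c) ^ n * blaschke_pow (complex_of_real (cmod \<alpha>)) n z"
    by (simp add: power_mult_distrib mult_ac)
  thus ?thesis using cc by simp
qed

lemma range_part:
  assumes a: "cmod \<alpha> < 1"
  shows "num_range_Sstar (blaschke_pow \<alpha> n)
       = (\<lambda>w. cis (- Arg \<alpha>) * w) ` num_range_Sstar (blaschke_pow (complex_of_real (cmod \<alpha>)) n)"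
proof -
  have r: "cmod (complex_of_real (cmod \<alpha>)) < 1" using a by simp
  have w: "cmod (cnj (cis (Arg \<alpha>))) = 1" by simp
  have "num_range_Sstar (blaschke_pow \<alpha> n)
       = (\<lambda>x. cnj (cis (Arg \<alpha>)) * x) ` num_range_Sstar (blaschke_pow (complex_of_real (cmod \<alpha>)) n)"
  proof (rule range_rot[OF w])
    show "\<And>z. blaschke_pow \<alpha> n z = cis (Arg \<alpha>) ^ n * blaschke_pow (complex_of_real (cmod \<alpha>)) n (cnj (cis (Arg \<alpha>)) * z)"
      by (rule bp_rot)
    show "\<And>z. blaschke_pow (complex_of_real (cmod \<alpha>)) n z = cnj (cis (Arg \<alpha>) ^ n) * blaschke_pow \<alpha> n (cnj (cnj (cis (Arg \<alpha>))) * z)"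
      by (rule bp_rot2)
    show "\<And>g. g \<in> hardy2 \<Longrightarrow> (\<lambda>z. blaschke_pow \<alpha> n z * g z) \<in> hardy2" by (rule bp_hardy2[OF a])
    show "\<And>g. g \<in> hardy2 \<Longrightarrow> (\<lambda>z. blaschke_pow (complex_of_real (cmod \<alpha>)) n z * g z) \<in> hardy2"
      by (rule bp_hardy2[OF r])
  qed
  thus ?thesis by (simp add: cis_cnj)
qed

lemma cmod_image_rot: "cmod w = 1 \<Longrightarrow> cmod ` ((\<lambda>x. w * x) ` S) = cmod ` S"
  by (simp add: image_image norm_mult)

lemma radius_part:
  assumes a: "cmod \<alpha> < 1" and b: "cmod \<beta> = cmod \<alpha>"
  shows "num_radius_Sstar (blaschke_pow \<beta> n) = num_radius_Sstar (blaschke_pow \<alpha> n)"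
proof -
  have b1: "cmod \<beta> < 1" using a b by simp
  show ?thesis unfolding num_radius_Sstar_def range_part[OF a] range_part[OF b1] b
    by (simp add: cmod_image_rot)
qed

lemma sym_part:
  assumes "0 \<le> a" "a < 1"
  shows "w \<in> num_range_Sstar (blaschke_pow (complex_of_real a) n)
         \<longleftrightarrow> cnj w \<in> num_range_Sstar (blaschke_pow (complex_of_real a) n)"
proof -
  have r: "cmod (complex_of_real a) < 1" using assms by simp
  have clos: "\<And>g. g \<in> hardy2 \<Longrightarrow> (\<lambda>z. blaschke_pow (complex_of_real a) n z * g z) \<in> hardy2"
    by (rule bp_hardy2[OF r])
  show ?thesis
    using range_conj[OF bp_real clos, of w] range_conj[OF bp_real clos, of "cnj w"] by auto
qed


theorem mainTheorem6:
  fixes n :: nat and \<alpha> :: complex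
  assumes "n \<ge> 1" and "cmod \<alpha> < 1"
  shows
    "(\<forall>k\<in>{1..n}. ebasis \<alpha> k \<in> model_space (blaschke_pow \<alpha> n))
     \<and> (\<forall>j\<in>{1..n}. \<forall>k\<in>{1..n}. h2_inner (ebasis \<alpha> j) (ebasis \<alpha> k) = (if j = k then 1 else 0))
     \<and> (\<forall>f\<in>model_space (blaschke_pow \<alpha> n). \<forall>z\<in>ball 0 1.
           f z = (\<Sum>k=1..n. h2_inner f (ebasis \<alpha> k) * ebasis \<alpha> k z))
     \<and> (\<exists>M. mat_inverse (1\<^sub>m n + \<alpha> \<cdot>\<^sub>m transpose_mat (shift_mat n)) = Some M
           \<and> mat n n (\<lambda>(i, j). h2_inner (bshift (ebasis \<alpha> (j + 1))) (ebasis \<alpha> (i + 1)))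
             = (transpose_mat (shift_mat n) + cnj \<alpha> \<cdot>\<^sub>m 1\<^sub>m n) * M)
     \<and> num_range_Sstar (blaschke_pow \<alpha> n)
           = (\<lambda>w. cis (- Arg \<alpha>) * w) ` num_range_Sstar (blaschke_pow (complex_of_real (cmod \<alpha>)) n)
     \<and> (\<forall>\<beta>. cmod \<beta> = cmod \<alpha> \<longrightarrow>
           num_radius_Sstar (blaschke_pow \<beta> n) = num_radius_Sstar (blaschke_pow \<alpha> n))
     \<and> (\<forall>a::real. 0 \<le> a \<and> a < 1 \<longrightarrow>
           (\<forall>w. w \<in> num_range_Sstar (blaschke_pow (complex_of_real a) n)
                \<longleftrightarrow> cnj w \<in> num_range_Sstar (blaschke_pow (complex_of_real a) n)))"
proof -
  note a = assms(2)
  have P1: "\<forall>k\<in>{1..n}. ebasis \<alpha> k \<in> model_space (blaschke_pow \<alpha> n)"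
    using e_model[OF a] by blast
  have P2: "\<forall>j\<in>{1..n}. \<forall>k\<in>{1..n}. h2_inner (ebasis \<alpha> j) (ebasis \<alpha> k) = (if j = k then 1 else 0)"
    using ortho[OF a] by auto
  have P3: "\<forall>f\<in>model_space (blaschke_pow \<alpha> n). \<forall>z\<in>ball 0 1.
           f z = (\<Sum>k=1..n. h2_inner f (ebasis \<alpha> k) * ebasis \<alpha> k z)"
    using complete[OF a] by blast
  have P4: "\<exists>M. mat_inverse (1\<^sub>m n + \<alpha> \<cdot>\<^sub>m transpose_mat (shift_mat n)) = Some M
           \<and> mat n n (\<lambda>(i, j). h2_inner (bshift (ebasis \<alpha> (j + 1))) (ebasis \<alpha> (i + 1)))
             = (transpose_mat (shift_mat n) + cnj \<alpha> \<cdot>\<^sub>m 1\<^sub>m n) * M"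
    using inv_Amat[of n \<alpha>] mat_part[OF a, of n] unfolding Amat_def Pmat_def by blast
  have P5: "num_range_Sstar (blaschke_pow \<alpha> n)
           = (\<lambda>w. cis (- Arg \<alpha>) * w) ` num_range_Sstar (blaschke_pow (complex_of_real (cmod \<alpha>)) n)"
    by (rule range_part[OF a])
  have P6: "\<forall>\<beta>. cmod \<beta> = cmod \<alpha> \<longrightarrow>
           num_radius_Sstar (blaschke_pow \<beta> n) = num_radius_Sstar (blaschke_pow \<alpha> n)"
    using radius_part[OF a] by blast
  have P7: "\<forall>a::real. 0 \<le> a \<and> a < 1 \<longrightarrow>
           (\<forall>w. w \<in> num_range_Sstar (blaschke_pow (complex_of_real a) n)
                \<longleftrightarrow> cnj w \<in> num_range_Sstar (blaschke_pow (complex_of_real a) n))"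
    using sym_part by blast
  show ?thesis using P1 P2 P3 P4 P5 P6 P7 by blast
qed

end
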